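(* Let $(\lambda,\boldsymbol p)\in\nabla$ and $\mu=\mu(\lambda,\boldsymbol p)=\lambda+\sum_ip_i$. If $k<\mu<k+1$ for some integer $k\ge0$, then $$m_+(\lambda,\boldsymbol p\setminus p_1)\le k\le m_-(\lambda,\boldsymbol p)\le m_+(\lambda,\boldsymbol p)\le k+1,$$ where $p_1=\max_ip_i$. If $\mu=k$ for an integer $k$, then $m_+(\lambda,\boldsymbol p)=m_-(\lambda,\boldsymbol p)=k$, unless $(\lambda,\boldsymbol p)=(k-a,1,\dots,1,0,0,\dots)$ with exactly $a$ ones, for some $k\ge1$ and $0\le a<k$, in which case the distribution is a Poisson distribution shifted to $\{a,a+1,\dots\}$ and has the twin mode $\{k-1,k\}$.
   Context: $\nabla=\{(\lambda,\boldsymbol p):\lambda\ge0,\ 1\ge p_1\ge p_2\ge\dots\ge0,\ \sum_ip_i<\infty\}$. For $(\lambda,\boldsymbol p)\in\nabla$ the extended Bernoulli sum is $S=X+\sum_iB_i$ with $X\sim\mathrm{Poisson}(\lambda)$, $B_i\sim\mathrm{Bernoulli}(p_i)$ independent; $f(k;\lambda,\boldsymbol p)=\mathbb P[S=k]$, $f(-1;\cdot)=0$; $\mu(\lambda,\boldsymbol p)=\mathbb E S$. The leading mode $m_+(\lambda,\boldsymbol p)$ is the unique integer $k$ with $f(k-1)\le f(k)>f(k+1)$; $m_-=m_+$ unless $f(m_+-1)=f(m_+)$, in which case $m_-=m_+-1$. $\boldsymbol p\setminus p_1$ denotes $\boldsymbol p$ with the term $p_1$ removed (replaced by $0$). *)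

theory Defs
  imports "HOL-Analysis.Analysis"
begin

text \<open>Parameters: \<open>p :: nat \<Rightarrow> real\<close>, with \<open>p 0\<close> playing the role of \<open>p_1\<close>.\<close>

definition in_nabla :: "real \<Rightarrow> (nat \<Rightarrow> real) \<Rightarrow> bool" where
  "in_nabla lam p \<longleftrightarrow> lam \<ge> 0 \<and> p 0 \<le> 1 \<and> (\<forall>i. p i \<ge> 0) \<and> (\<forall>i. p (Suc i) \<le> p i)
      \<and> summable p"

definition bern_fin :: "(nat \<Rightarrow> real) \<Rightarrow> nat \<Rightarrow> nat \<Rightarrow> real" where
  "bern_fin p n j = (\<Sum>A\<in>{A. A \<subseteq> {..<n} \<and> card A = j}.
       (\<Prod>i\<in>A. p i) * (\<Prod>i\<in>{..<n} - A. 1 - p i))"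

definition bern_law :: "(nat \<Rightarrow> real) \<Rightarrow> nat \<Rightarrow> real" where
  "bern_law p j = lim (\<lambda>n. bern_fin p n j)"

text \<open>\<open>f(k;\<lambda>,p) = P[X + \<Sum>_i B_i = k]\<close>, \<open>X ~ Poisson(\<lambda>)\<close> independent.\<close>
definition ebs_pmf :: "real \<Rightarrow> (nat \<Rightarrow> real) \<Rightarrow> nat \<Rightarrow> real" where
  "ebs_pmf lam p k = (\<Sum>j\<le>k. exp (- lam) * lam ^ (k - j) / fact (k - j) * bern_law p j)"

definition ebs_mean :: "real \<Rightarrow> (nat \<Rightarrow> real) \<Rightarrow> real" where
  "ebs_mean lam p = lam + suminf p"

definition mode_plus :: "real \<Rightarrow> (nat \<Rightarrow> real) \<Rightarrow> nat" where
  "mode_plus lam p = (THE k. (k = 0 \<or> ebs_pmf lam p (k - 1) \<le> ebs_pmf lam p k)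
                              \<and> ebs_pmf lam p k > ebs_pmf lam p (Suc k))"

definition mode_minus :: "real \<Rightarrow> (nat \<Rightarrow> real) \<Rightarrow> nat" where
  "mode_minus lam p = (let m = mode_plus lam p in
     if m > 0 \<and> ebs_pmf lam p (m - 1) = ebs_pmf lam p m then m - 1 else m)"

end

theory Submission
  imports Defs
begin


primrec B :: "(nat \<Rightarrow> real) \<Rightarrow> nat \<Rightarrow> int \<Rightarrow> real" where
  "B r 0 k = (if k = 0 then 1 else 0)"
| "B r (Suc m) k = (1 - r m) * B r m k + r m * B r m (k - 1)"

definition valid :: "(nat \<Rightarrow> real) \<Rightarrow> nat \<Rightarrow> bool" where
  "valid r m \<longleftrightarrow> (\<forall>i<m. 0 \<le> r i \<and> r i \<le> 1)"

lemma B_neg: "k < 0 \<Longrightarrow> B r m k = 0"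
  by (induction m arbitrary: k) auto

lemma B_big: "k > int m \<Longrightarrow> B r m k = 0"
  by (induction m arbitrary: k) auto

lemma B_cong: "(\<And>i. i < m \<Longrightarrow> r i = s i) \<Longrightarrow> B r m k = B s m k"
  by (induction m arbitrary: k) auto

lemma B_nonneg: "valid r m \<Longrightarrow> B r m k \<ge> 0"
proof (induction m arbitrary: k)
  case 0 then show ?case by simp
next
  case (Suc m)
  have v: "valid r m" "0 \<le> r m" "r m \<le> 1" using Suc.prems by (auto simp: valid_def)
  show ?case using Suc.IH[OF v(1)] v by simp
qed

lemma B_le1: "valid r m \<Longrightarrow> B r m k \<le> 1"
proof (induction m arbitrary: k)
  case 0 then show ?case by simp
next
  case (Suc m)
  have v: "valid r m" "0 \<le> r m" "r m \<le> 1" using Suc.prems by (auto simp: valid_def)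
  have a: "B r m k \<le> 1" "B r m (k-1) \<le> 1" using Suc.IH[OF v(1)] by auto
  have "(1 - r m) * B r m k \<le> (1 - r m) * 1" using a v by (intro mult_left_mono) auto
  moreover have "r m * B r m (k-1) \<le> r m * 1" using a v by (intro mult_left_mono) auto
  ultimately show ?case by simp
qed

lemma bern_fin_B: "bern_fin p n j = B p n (int j)"
proof (induction n arbitrary: j)
  case 0
  have "{A. A \<subseteq> {..<0::nat} \<and> card A = j} = (if j = 0 then {{}} else {})" by auto
  then show ?case by (simp add: bern_fin_def)
next
  case (Suc n)
  define w where "w = (\<lambda>N A. (\<Prod>i\<in>A. p i) * (\<Prod>i\<in>{..<N} - A. 1 - p i))"
  have bf: "bern_fin p N j = (\<Sum>A\<in>{A. A \<subseteq> {..<N} \<and> card A = j}. w N A)" for N j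
    by (simp add: bern_fin_def w_def)
  have fin: "finite {A. A \<subseteq> {..<N} \<and> card A = j}" for N :: nat and j
    by (rule finite_subset[of _ "Pow {..<N}"]) auto
  have w0: "w (Suc n) A = (1 - p n) * w n A" if "A \<subseteq> {..<n}" for A
  proof -
    have "{..<Suc n} - A = insert n ({..<n} - A)" using that by auto
    then show ?thesis using that by (auto simp: w_def)
  qed
  have w1: "w (Suc n) (insert n A) = p n * w n A" if "A \<subseteq> {..<n}" for A
  proof -
    have "{..<Suc n} - insert n A = {..<n} - A" using that by auto
    moreover have "n \<notin> A" using that by auto
    moreover have "finite A" using that finite_subset by blast
    ultimately show ?thesis by (simp add: w_def)
  qed
  have split: "{A. A \<subseteq> {..<Suc n} \<and> card A = j} =
      {A. A \<subseteq> {..<n} \<and> card A = j} \<union> (if j = 0 then {} else insert n ` {A. A \<subseteq> {..<n} \<and> card A = j - 1})"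
  proof (cases j)
    case 0
    then show ?thesis by (auto dest: finite_subset[of _ "{..<Suc n}"])
  next
    case (Suc j')
    show ?thesis
    proof (rule set_eqI, rule iffI)
      fix A assume A: "A \<in> {A. A \<subseteq> {..<Suc n} \<and> card A = j}"
      show "A \<in> {A. A \<subseteq> {..<n} \<and> card A = j} \<union> (if j = 0 then {} else insert n ` {A. A \<subseteq> {..<n} \<and> card A = j - 1})"
      proof (cases "n \<in> A")
        case True
        have e: "A = insert n (A - {n})" using True by auto
        have mem: "A - {n} \<in> {A. A \<subseteq> {..<n} \<and> card A = j - 1}"
          using A True finite_subset[of A "{..<Suc n}"] by (auto simp: less_Suc_eq)
        have "A \<in> insert n ` {A. A \<subseteq> {..<n} \<and> card A = j - 1}"
          by (rule rev_image_eqI[where f="insert n", OF mem e])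
        then show ?thesis using Suc by simp
      next
        case False
        then have "A \<subseteq> {..<n}" using A by (auto simp: less_Suc_eq)
        then show ?thesis using A by auto
      qed
    next
      fix A assume "A \<in> {A. A \<subseteq> {..<n} \<and> card A = j} \<union> (if j = 0 then {} else insert n ` {A. A \<subseteq> {..<n} \<and> card A = j - 1})"
      then show "A \<in> {A. A \<subseteq> {..<Suc n} \<and> card A = j}"
      proof
        assume "A \<in> {A. A \<subseteq> {..<n} \<and> card A = j}" then show ?thesis by auto
      next
        assume "A \<in> (if j = 0 then {} else insert n ` {A. A \<subseteq> {..<n} \<and> card A = j - 1})"
        then obtain A' where "A = insert n A'" "A' \<subseteq> {..<n}" "card A' = j - 1" using Suc by auto
        moreover have "finite A'" "n \<notin> A'" using \<open>A' \<subseteq> {..<n}\<close> finite_subset by auto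
        ultimately show ?thesis using Suc by auto
      qed
    qed
  qed
  have disj: "{A. A \<subseteq> {..<n} \<and> card A = j} \<inter> insert n ` {A. A \<subseteq> {..<n} \<and> card A = j - 1} = {}"
    by auto
  have inj: "inj_on (insert n) {A. A \<subseteq> {..<n} \<and> card A = j - 1}"
    by (auto simp: inj_on_def)
  show ?case
  proof (cases "j = 0")
    case True
    have "bern_fin p (Suc n) j = (\<Sum>A\<in>{A. A \<subseteq> {..<n} \<and> card A = j}. w (Suc n) A)"
      using split True by (simp add: bf)
    also have "\<dots> = (1 - p n) * bern_fin p n j" by (simp add: bf sum_distrib_left w0)
    finally show ?thesis using True Suc.IH by (simp add: B_neg)
  next
    case False
    have "bern_fin p (Suc n) j = (\<Sum>A\<in>{A. A \<subseteq> {..<n} \<and> card A = j}. w (Suc n) A)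
         + (\<Sum>A\<in>insert n ` {A. A \<subseteq> {..<n} \<and> card A = j - 1}. w (Suc n) A)"
      unfolding bf split using False
      by (simp only: if_False, intro sum.union_disjoint fin finite_imageI disj)
    also have "(\<Sum>A\<in>insert n ` {A. A \<subseteq> {..<n} \<and> card A = j - 1}. w (Suc n) A)
        = (\<Sum>A\<in>{A. A \<subseteq> {..<n} \<and> card A = j - 1}. w (Suc n) (insert n A))"
      using sum.reindex[OF inj, of "w (Suc n)"] by (simp add: comp_def)
    also have "\<dots> = p n * bern_fin p n (j - 1)" by (simp add: bf sum_distrib_left w1)
    also have "(\<Sum>A\<in>{A. A \<subseteq> {..<n} \<and> card A = j}. w (Suc n) A) = (1 - p n) * bern_fin p n j"
      by (simp add: bf sum_distrib_left w0)
    finally show ?thesis using False Suc.IH by (simp add: of_nat_diff)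
  qed
qed


lemma B_Suc_zero: "r m = 0 \<Longrightarrow> B r (Suc m) k = B r m k"
  by simp

lemma B_remove: "i < m \<Longrightarrow> B r m k = (1 - r i) * B (r(i:=0)) m k + r i * B (r(i:=0)) m (k-1)"
proof (induction m arbitrary: k)
  case 0 then show ?case by simp
next
  case (Suc m)
  define h where "h = r(i:=0)"
  have hi: "h i = 0" by (simp add: h_def)
  show ?case
  proof (cases "i = m")
    case True
    have e: "B h (Suc m) k' = B r m k'" for k'
      using True unfolding h_def by (simp, intro B_cong, auto)
    show ?thesis unfolding h_def[symmetric] by (simp only: e) (simp add: True)
  next
    case False
    then have im: "i < m" using Suc.prems by simp
    have hm: "h m = r m" using False by (simp add: h_def)
    have e: "B h (Suc m) k' = (1 - r m) * B h m k' + r m * B h m (k'-1)" for k'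
      by (simp only: B.simps hm)
    note I1 = Suc.IH[OF im, of k, folded h_def]
    note I2 = Suc.IH[OF im, of "k-1", folded h_def]
    have "B r (Suc m) k = (1 - r m) * B r m k + r m * B r m (k-1)" by simp
    also have "\<dots> = (1 - r i) * B h (Suc m) k + r i * B h (Suc m) (k-1)"
      unfolding e I1 I2 by (simp add: algebra_simps)
    finally show ?thesis by (simp only: h_def)
  qed
qed

lemma B_upd_ge: "m \<le> i \<Longrightarrow> B (r(i:=v)) m k = B r m k"
  by (intro B_cong) auto

lemma B_id1: "of_int k * B r m k = (\<Sum>i<m. r i * B (r(i:=0)) m (k-1))"
proof (induction m arbitrary: k)
  case 0 then show ?case by simp
next
  case (Suc m)
  let ?q = "r m"
  have h: "B (r(i:=0)) (Suc m) k' = (1 - ?q) * B (r(i:=0)) m k' + ?q * B (r(i:=0)) m (k'-1)"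
    if "i < m" for i k'
  proof -
    have "m \<noteq> i" using that by simp
    then have "(r(i:=0)) m = r m" by simp
    then show ?thesis by (simp only: B.simps)
  qed
  have hm: "B (r(m:=0)) (Suc m) k' = B r m k'" for k'
    by (simp, intro B_cong, auto)
  have "(\<Sum>i<Suc m. r i * B (r(i:=0)) (Suc m) (k-1))
      = (\<Sum>i<m. r i * B (r(i:=0)) (Suc m) (k-1)) + ?q * B (r(m:=0)) (Suc m) (k-1)"
    by (rule sum.lessThan_Suc)
  also have "?q * B (r(m:=0)) (Suc m) (k-1) = ?q * B r m (k-1)" by (simp only: hm)
  also have "(\<Sum>i<m. r i * B (r(i:=0)) (Suc m) (k-1))
      = (\<Sum>i<m. (1 - ?q) * (r i * B (r(i:=0)) m (k-1)) + ?q * (r i * B (r(i:=0)) m (k-1-1)))"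
    by (intro sum.cong refl) (simp only: h lessThan_iff algebra_simps)
  also have "\<dots> = (1 - ?q) * (\<Sum>i<m. r i * B (r(i:=0)) m (k-1)) + ?q * (\<Sum>i<m. r i * B (r(i:=0)) m (k-1-1))"
    by (simp add: sum_distrib_left sum.distrib)
  also have "\<dots> = (1 - ?q) * (of_int k * B r m k) + ?q * (of_int (k-1) * B r m (k-1))"
    by (simp only: Suc.IH[of k] Suc.IH[of "k-1"])
  finally show ?case by (simp add: algebra_simps)
qed

lemma B_sum1_aux: "valid r m \<Longrightarrow> (\<Sum>j\<le>N. B r m (int j)) = 1 \<and> (\<Sum>j\<le>N. of_nat j * B r m (int j)) = (\<Sum>i<m. r i)"
  if "m \<le> N" for N
  using that
proof (induction m arbitrary: N)
  case 0
  have "(\<Sum>j\<le>N. B r 0 (int j)) = (\<Sum>j\<in>{0}. B r 0 (int j))"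
    by (intro sum.mono_neutral_right) auto
  moreover have "(\<Sum>j\<le>N. of_nat j * B r 0 (int j)) = 0"
    by (intro sum.neutral) auto
  ultimately show ?case by simp
next
  case (Suc m)
  then obtain N' where N: "N = Suc N'" "m \<le> N'" by (cases N) auto
  have v: "valid r m" using Suc.prems by (auto simp: valid_def)
  have IH: "(\<Sum>j\<le>N. B r m (int j)) = 1" "(\<Sum>j\<le>N. of_nat j * B r m (int j)) = (\<Sum>i<m. r i)"
    using Suc.IH[OF v, of N] N by auto
  have top: "B r m (int N) = 0" using N B_big[of m "int N"] by simp
  have s1: "(\<Sum>j\<le>N. B r m (int j - 1)) = (\<Sum>j\<le>N. B r m (int j))"
  proof -
    have "(\<Sum>j\<le>N. B r m (int j - 1)) = (\<Sum>j\<le>Suc N'. B r m (int j - 1))" using N by simp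
    also have "\<dots> = (\<Sum>j\<le>N'. B r m (int j))"
      by (subst sum.atMost_Suc_shift) (simp add: B_neg)
    also have "\<dots> = (\<Sum>j\<le>N. B r m (int j))" using N top by simp
    finally show ?thesis .
  qed
  have s2: "(\<Sum>j\<le>N. of_nat j * B r m (int j - 1)) = (\<Sum>j\<le>N. of_nat j * B r m (int j)) + (\<Sum>j\<le>N. B r m (int j))"
  proof -
    have "(\<Sum>j\<le>N. of_nat j * B r m (int j - 1)) = (\<Sum>j\<le>Suc N'. of_nat j * B r m (int j - 1))" using N by simp
    also have "\<dots> = (\<Sum>j\<le>N'. (1 + of_nat j) * B r m (int j))"
      by (subst sum.atMost_Suc_shift) (simp add: B_neg)
    also have "\<dots> = (\<Sum>j\<le>N. (1 + of_nat j) * B r m (int j))" using N top by simp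
    finally show ?thesis by (simp add: algebra_simps sum.distrib add.commute)
  qed
  have t1: "(\<Sum>j\<le>N. B r (Suc m) (int j)) = (1 - r m) * (\<Sum>j\<le>N. B r m (int j)) + r m * (\<Sum>j\<le>N. B r m (int j - 1))"
    by (simp add: sum.distrib sum_distrib_left)
  have t2: "(\<Sum>j\<le>N. of_nat j * B r (Suc m) (int j)) = (1 - r m) * (\<Sum>j\<le>N. of_nat j * B r m (int j)) + r m * (\<Sum>j\<le>N. of_nat j * B r m (int j - 1))"
    by (simp add: sum_distrib_left sum.distrib[symmetric] algebra_simps)
  show ?case
    unfolding t1 t2 s1 s2 IH by (simp add: algebra_simps)
qed

lemma B_sum1: "valid r m \<Longrightarrow> m \<le> N \<Longrightarrow> (\<Sum>j\<le>N. B r m (int j)) = 1"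
  using B_sum1_aux by blast

lemma B_mean: "valid r m \<Longrightarrow> m \<le> N \<Longrightarrow> (\<Sum>j\<le>N. of_nat j * B r m (int j)) = (\<Sum>i<m. r i)"
  using B_sum1_aux by blast

lemma valid_upd0: "valid r m \<Longrightarrow> valid (r(i:=0)) m"
  by (auto simp: valid_def)

lemma sum_upd0: "(\<Sum>j<m. (r(i:=0)) j) = (\<Sum>j<m. r j) - r i" if "i < m" for r :: "nat \<Rightarrow> real"
proof -
  have a: "(\<Sum>j<m. (r(i:=0)) j) = (r(i:=0)) i + (\<Sum>j\<in>{..<m}-{i}. (r(i:=0)) j)"
    by (rule sum.remove) (use that in auto)
  have b: "(\<Sum>j\<in>{..<m}-{i}. (r(i:=0)) j) = (\<Sum>j\<in>{..<m}-{i}. r j)" by (rule sum.cong) auto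
  have c: "(\<Sum>j<m. r j) = r i + (\<Sum>j\<in>{..<m}-{i}. r j)"
    by (rule sum.remove) (use that in auto)
  show ?thesis unfolding a b c by simp
qed


abbreviation mu :: "(nat \<Rightarrow> real) \<Rightarrow> nat \<Rightarrow> real" where
  "mu r m \<equiv> (\<Sum>i<m. r i)"

lemma B_ident: "of_int k * (B r m k - B r m (k-1)) = (mu r m - of_int k) * B r m (k-1)
   + (\<Sum>i<m. r i ^ 2 * (B (r(i:=0)) m (k-1) - B (r(i:=0)) m (k-1-1)))"
proof -
  have e: "r i * B (r(i:=0)) m (k-1) = r i * B r m (k-1) + r i ^ 2 * (B (r(i:=0)) m (k-1) - B (r(i:=0)) m (k-1-1))"
    if "i < m" for i
  proof -
    have "B r m (k-1) = (1 - r i) * B (r(i:=0)) m (k-1) + r i * B (r(i:=0)) m (k-1-1)"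
      using B_remove[OF that] .
    then have "r i * B r m (k-1) = r i * ((1 - r i) * B (r(i:=0)) m (k-1) + r i * B (r(i:=0)) m (k-1-1))" by simp
    then show ?thesis by (simp add: algebra_simps power2_eq_square)
  qed
  have "of_int k * B r m k = (\<Sum>i<m. r i * B r m (k-1) + r i ^ 2 * (B (r(i:=0)) m (k-1) - B (r(i:=0)) m (k-1-1)))"
    unfolding B_id1 by (intro sum.cong refl) (simp add: e)
  also have "\<dots> = mu r m * B r m (k-1) + (\<Sum>i<m. r i ^ 2 * (B (r(i:=0)) m (k-1) - B (r(i:=0)) m (k-1-1)))"
    by (simp add: sum.distrib sum_distrib_right)
  finally show ?thesis by (simp add: algebra_simps)
qed

lemma Ld_nat:
  assumes "0 \<le> d" "d < 1"
  shows "\<forall>r. valid r m \<and> (\<forall>i<m. r i = 0 \<or> d \<le> r i) \<and> real n \<le> mu r m + d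
           \<longrightarrow> B r m (int n - 1) \<le> B r m (int n)"
proof (induction n)
  case 0
  show ?case by (auto simp: B_neg B_nonneg)
next
  case (Suc n)
  show ?case
  proof (intro allI impI)
    fix r assume H: "valid r m \<and> (\<forall>i<m. r i = 0 \<or> d \<le> r i) \<and> real (Suc n) \<le> mu r m + d"
    define k where "k = int (Suc n)"
    have v: "valid r m" and cond: "\<forall>i<m. r i = 0 \<or> d \<le> r i" and mu: "real (Suc n) \<le> mu r m + d"
      using H by auto
    define D where "D i = B (r(i:=0)) m (k-1) - B (r(i:=0)) m (k-1-1)" for i
    have Dnn: "D i \<ge> 0" if "i < m" for i
    proof -
      have "valid (r(i:=0)) m" using v by (rule valid_upd0)
      moreover have "\<forall>j<m. (r(i:=0)) j = 0 \<or> d \<le> (r(i:=0)) j" using cond by auto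
      moreover have "real n \<le> mu (r(i:=0)) m + d"
        using mu sum_upd0[OF that, of r] v that by (auto simp: valid_def)
      ultimately have "B (r(i:=0)) m (int n - 1) \<le> B (r(i:=0)) m (int n)"
        using Suc.IH by blast
      then show ?thesis by (simp add: D_def k_def)
    qed
    have Id: "of_int k * (B r m k - B r m (k-1)) = (mu r m - of_int k) * B r m (k-1) + (\<Sum>i<m. r i ^ 2 * D i)"
      unfolding D_def by (rule B_ident)
    have S: "(\<Sum>i<m. r i ^ 2 * D i) \<ge> d * (\<Sum>i<m. r i * D i)"
    proof -
      have "(\<Sum>i<m. d * (r i * D i)) \<le> (\<Sum>i<m. r i ^ 2 * D i)"
      proof (rule sum_mono)
        fix i assume "i \<in> {..<m}"
        then have i: "i < m" by simp
        show "d * (r i * D i) \<le> r i ^ 2 * D i"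
        proof (cases "r i = 0")
          case True then show ?thesis by simp
        next
          case False
          then have "d \<le> r i" using cond i by auto
          moreover have "0 \<le> r i * D i" using Dnn[OF i] v i by (auto simp: valid_def)
          ultimately have "d * (r i * D i) \<le> r i * (r i * D i)" by (rule mult_right_mono)
          then show ?thesis by (simp add: power2_eq_square mult.assoc)
        qed
      qed
      then show ?thesis by (simp add: sum_distrib_left)
    qed
    have T: "(\<Sum>i<m. r i * D i) = of_int k * B r m k - of_int (k-1) * B r m (k-1)"
      unfolding D_def B_id1[of k] B_id1[of "k-1"] by (simp add: sum_subtractf algebra_simps)
    have ring: "of_int k * (1-d) * (B r m k - B r m (k-1)) - (mu r m + d - of_int k) * B r m (k-1)
       = (of_int k * (B r m k - B r m (k-1)) - (mu r m - of_int k) * B r m (k-1))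
         - d * (of_int k * B r m k - of_int (k-1) * B r m (k-1))"
      by (simp add: algebra_simps)
    have S': "(\<Sum>i<m. r i ^ 2 * D i) \<ge> d * (of_int k * B r m k - of_int (k-1) * B r m (k-1))"
      using S unfolding T .
    have "of_int k * (1-d) * (B r m k - B r m (k-1)) \<ge> (mu r m + d - of_int k) * B r m (k-1)"
      using ring Id S' by linarith
    moreover have "(mu r m + d - of_int k) * B r m (k-1) \<ge> 0"
      using mu B_nonneg[OF v] by (simp add: k_def)
    ultimately have "of_int k * (1-d) * (B r m k - B r m (k-1)) \<ge> 0" by linarith
    moreover have "of_int k * (1-d) > 0" using assms by (simp add: k_def)
    ultimately have "B r m k - B r m (k-1) \<ge> 0"
      by (simp add: zero_le_mult_iff)
    then show "B r m (int (Suc n) - 1) \<le> B r m (int (Suc n))" by (simp add: k_def)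
  qed
qed

lemma Ld:
  assumes "valid r m" "0 \<le> d" "d < 1" "\<forall>i<m. r i = 0 \<or> d \<le> r i" "of_int k \<le> mu r m + d"
  shows "B r m (k-1) \<le> B r m k"
proof (cases "k < 0")
  case True then show ?thesis by (simp add: B_neg)
next
  case False
  then obtain n where "k = int n" by (metis nonneg_int_cases not_less)
  then show ?thesis using Ld_nat[OF assms(2,3), of m n] assms by auto
qed

lemma L0:
  assumes "valid r m" "of_int k \<le> mu r m"
  shows "B r m (k-1) \<le> B r m k"
  by (rule Ld[OF assms(1), of 0 k]) (use assms in \<open>auto simp: valid_def\<close>)

lemma Lq:
  assumes v: "valid r m" and mu: "of_int k \<le> mu r m" and i: "i < m"
  shows "of_int k * (B r m k - B r m (k-1)) \<ge> (mu r m - of_int k) * B r m (k-1)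
            + r i ^ 2 * (B (r(i:=0)) m (k-1) - B (r(i:=0)) m (k-1-1))"
proof -
  define T where "T j = r j ^ 2 * (B (r(i:=0)) m (k-1) - B (r(i:=0)) m (k-1-1))" for j
  define D where "D j = r j ^ 2 * (B (r(j:=0)) m (k-1) - B (r(j:=0)) m (k-1-1))" for j
  have nn: "D j \<ge> 0" if "j < m" for j
  proof -
    have "B (r(j:=0)) m (k-1-1) \<le> B (r(j:=0)) m (k-1)"
      using L0[OF valid_upd0[OF v], of "k-1" j] mu sum_upd0[OF that, of r] v that
      by (auto simp: valid_def)
    then show ?thesis by (simp add: D_def)
  qed
  have "D i \<le> (\<Sum>j<m. D j)"
    using i nn by (intro member_le_sum) auto
  then show ?thesis using B_ident[of k r m] unfolding D_def by simp
qed

lemma Lq0: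
  assumes v: "valid r m" and mu: "of_int k \<le> mu r m"
  shows "of_int k * (B r m k - B r m (k-1)) \<ge> (mu r m - of_int k) * B r m (k-1)"
proof -
  have nn: "r j ^ 2 * (B (r(j:=0)) m (k-1) - B (r(j:=0)) m (k-1-1)) \<ge> 0" if "j < m" for j
  proof -
    have "B (r(j:=0)) m (k-1-1) \<le> B (r(j:=0)) m (k-1)"
      using L0[OF valid_upd0[OF v], of "k-1" j] mu sum_upd0[OF that, of r] v that
      by (auto simp: valid_def)
    then show ?thesis by simp
  qed
  have "(\<Sum>j<m. r j ^ 2 * (B (r(j:=0)) m (k-1) - B (r(j:=0)) m (k-1-1))) \<ge> 0"
    using nn by (intro sum_nonneg) auto
  then show ?thesis using B_ident[of k r m] by simp
qed

lemma B_reflect: "B (\<lambda>i. 1 - r i) m k = B r m (int m - k)"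
proof (induction m arbitrary: k)
  case 0 then show ?case by auto
next
  case (Suc m)
  have "B (\<lambda>i. 1 - r i) (Suc m) k = r m * B r m (int m - k) + (1 - r m) * B r m (int m - (k - 1))"
    using Suc.IH[of k] Suc.IH[of "k-1"] by simp
  also have "\<dots> = B r (Suc m) (int (Suc m) - k)"
    by (simp add: algebra_simps)
  finally show ?case .
qed

lemma WU_fin:
  assumes v: "valid r m" and c: "0 < c" "c \<le> 1" and le: "\<forall>i<m. r i \<le> c"
    and mu: "mu r m + c \<le> of_int k + 1"
  shows "B r m (k+1) \<le> B r m k"
proof -
  let ?r = "\<lambda>i. 1 - r i"
  have v': "valid ?r m" using v by (auto simp: valid_def)
  have cond: "\<forall>i<m. ?r i = 0 \<or> 1 - c \<le> ?r i" using le by auto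
  have "mu ?r m = real m - mu r m" by (simp add: sum_subtractf)
  then have "of_int (int m - k) \<le> mu ?r m + (1 - c)" using mu by simp
  from Ld[OF v' _ _ cond this] c
  have "B ?r m (int m - k - 1) \<le> B ?r m (int m - k)" by simp
  then show ?thesis unfolding B_reflect by simp
qed


lemma PF2: "valid r m \<Longrightarrow> x \<le> y \<Longrightarrow> B r m (x-1) * B r m (y+1) \<le> B r m x * B r m y"
proof (induction m arbitrary: x y)
  case 0
  then show ?case by auto
next
  case (Suc m)
  have v: "valid r m" and q: "0 \<le> r m" "r m \<le> 1" using Suc.prems by (auto simp: valid_def)
  define q where "q = r m"
  define g where "g = B r m"
  have IH: "a \<le> b \<Longrightarrow> g (a-1) * g (b+1) \<le> g a * g b" for a b
    using Suc.IH[OF v] by (simp add: g_def)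
  have A1: "g x * g y - g (x-1) * g (y+1) \<ge> 0" using IH[OF Suc.prems(2)] by simp
  have A2: "g (x-1) * g (y-1) - g (x-1-1) * g (y-1+1) \<ge> 0" using IH[of "x-1" "y-1"] Suc.prems(2) by simp
  have A3: "g x * g (y-1) - g (x-1-1) * g (y+1) \<ge> 0"
  proof (cases "x = y")
    case True
    then show ?thesis using IH[of "x-1" x] by (simp add: mult.commute)
  next
    case False
    then have "x \<le> y - 1" using Suc.prems(2) by simp
    then have "g (x-1) * g (y-1+1) \<le> g x * g (y-1)" using IH[of x "y-1"] by simp
    moreover have "g (x-1-1) * g (y+1) \<le> g (x-1) * g y" using IH[of "x-1" y] Suc.prems(2) by simp
    ultimately show ?thesis by simp
  qed
  have f: "B r (Suc m) j = (1-q) * g j + q * g (j-1)" for j by (simp add: q_def g_def)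
  have "B r (Suc m) x * B r (Suc m) y - B r (Suc m) (x-1) * B r (Suc m) (y+1)
      = (1-q)^2 * (g x * g y - g (x-1) * g (y+1)) + q^2 * (g (x-1) * g (y-1) - g (x-1-1) * g (y-1+1))
        + q * (1-q) * (g x * g (y-1) - g (x-1-1) * g (y+1))"
    unfolding f by (simp add: algebra_simps power2_eq_square)
  moreover have "(1-q)^2 * (g x * g y - g (x-1) * g (y+1)) \<ge> 0" using A1 by simp
  moreover have "q^2 * (g (x-1) * g (y-1) - g (x-1-1) * g (y-1+1)) \<ge> 0" using A2 by simp
  moreover have "q * (1-q) * (g x * g (y-1) - g (x-1-1) * g (y+1)) \<ge> 0"
    using A3 q by (simp add: q_def)
  ultimately show ?case by linarith
qed


lemma B_conv: "B r (n + m) k = (\<Sum>j\<le>n. B r n (int j) * B (\<lambda>i. r (n+i)) m (k - int j))"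
proof (induction m arbitrary: k)
  case 0
  show ?case
  proof (cases "0 \<le> k \<and> k \<le> int n")
    case True
    then obtain j0 where j0: "k = int j0" "j0 \<le> n" by (metis nonneg_int_cases of_nat_le_iff)
    have "(\<Sum>j\<le>n. B r n (int j) * B (\<lambda>i. r (n+i)) 0 (k - int j)) = (\<Sum>j\<in>{j0}. B r n (int j) * B (\<lambda>i. r (n+i)) 0 (k - int j))"
      using j0 by (intro sum.mono_neutral_right) auto
    then show ?thesis using j0 by simp
  next
    case False
    then have "B r n k = 0" by (auto simp: B_neg B_big)
    moreover have "(\<Sum>j\<le>n. B r n (int j) * B (\<lambda>i. r (n+i)) 0 (k - int j)) = 0"
      using False by (intro sum.neutral) auto
    ultimately show ?thesis by simp
  qed
next
  case (Suc m)
  have "B r (n + Suc m) k = (1 - r (n+m)) * B r (n+m) k + r (n+m) * B r (n+m) (k-1)" by simp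
  also have "\<dots> = (\<Sum>j\<le>n. (1 - r (n+m)) * (B r n (int j) * B (\<lambda>i. r (n+i)) m (k - int j)) + r (n+m) * (B r n (int j) * B (\<lambda>i. r (n+i)) m (k - 1 - int j)))"
    unfolding Suc.IH[of k] Suc.IH[of "k-1"] by (simp only: sum_distrib_left sum.distrib)
  also have "\<dots> = (\<Sum>j\<le>n. B r n (int j) * B (\<lambda>i. r (n+i)) (Suc m) (k - int j))"
  proof (intro sum.cong refl)
    fix j
    have "k - 1 - int j = k - int j - 1" by simp
    then show "(1 - r (n+m)) * (B r n (int j) * B (\<lambda>i. r (n+i)) m (k - int j)) + r (n+m) * (B r n (int j) * B (\<lambda>i. r (n+i)) m (k - 1 - int j))
      = B r n (int j) * B (\<lambda>i. r (n+i)) (Suc m) (k - int j)"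
      by (simp only: B.simps) (simp add: algebra_simps)
  qed
  finally show ?case .
qed


lemma B_binom: "B (\<lambda>_. x) n (int j) = of_nat (n choose j) * x ^ j * (1-x) ^ (n - j)"
proof (induction n arbitrary: j)
  case 0 then show ?case by (cases j) auto
next
  case (Suc n)
  show ?case
  proof (cases j)
    case 0
    then show ?thesis using Suc.IH[of 0] by (simp add: B_neg)
  next
    case (Suc j')
    have "int j - 1 = int j'" using Suc by simp
    then have e: "B (\<lambda>_. x) (Suc n) (int j) = (1-x) * B (\<lambda>_. x) n (int j) + x * B (\<lambda>_. x) n (int j')"
      by (simp only: B.simps)
    have t1: "(1-x) * B (\<lambda>_. x) n (int j) = of_nat (n choose j) * x ^ j * (1-x) ^ (n - j')"
    proof (cases "j \<le> n")
      case True
      then have "n - j' = Suc (n - j)" using Suc by simp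
      then show ?thesis unfolding Suc.IH[of j] by (simp only: power_Suc mult_ac)
    next
      case False
      then have "n choose j = 0" by simp
      then show ?thesis unfolding Suc.IH[of j] by simp
    qed
    have t2: "x * B (\<lambda>_. x) n (int j') = of_nat (n choose j') * x ^ j * (1-x) ^ (n - j')"
      unfolding Suc.IH[of j'] using Suc by (simp only: power_Suc mult_ac)
    have "Suc n choose j = (n choose j') + (n choose j)" using Suc by simp
    then have "of_nat (Suc n choose j) = (of_nat (n choose j) + of_nat (n choose j') :: real)" by simp
    moreover have "Suc n - j = n - j'" using Suc by simp
    ultimately show ?thesis unfolding e t1 t2 by (simp add: algebra_simps)
  qed
qed


definition tilt :: "real \<Rightarrow> (nat \<Rightarrow> real) \<Rightarrow> nat \<Rightarrow> real" where
  "tilt t r i = r i * t / (1 - r i + r i * t)"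

definition Zt :: "real \<Rightarrow> (nat \<Rightarrow> real) \<Rightarrow> nat \<Rightarrow> real" where
  "Zt t r m = (\<Prod>i<m. 1 - r i + r i * t)"

lemma tilt_den: "0 \<le> q \<Longrightarrow> 1 \<le> t \<Longrightarrow> 1 \<le> 1 - q + q * t" for q t :: real
proof -
  assume "0 \<le> q" "1 \<le> t"
  then have "0 \<le> q * (t - 1)" by (intro mult_nonneg_nonneg) auto
  then show ?thesis by (simp add: algebra_simps)
qed

lemma B_tilt:
  assumes "valid r m" "1 \<le> t"
  shows "B (tilt t r) m k * Zt t r m = t ^ nat k * B r m k"
  using assms(1)
proof (induction m arbitrary: k)
  case 0 then show ?case by (simp add: Zt_def)
next
  case (Suc m)
  have v: "valid r m" and q: "0 \<le> r m" "r m \<le> 1" using Suc.prems by (auto simp: valid_def)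
  let ?q = "r m"
  let ?den = "1 - ?q + ?q * t"
  have den: "?den \<ge> 1" using tilt_den[OF q(1) assms(2)] .
  have a: "(1 - tilt t r m) * ?den = 1 - ?q" using den by (simp add: tilt_def field_simps)
  have b: "tilt t r m * ?den = ?q * t" using den by (simp add: tilt_def field_simps)
  have Z: "Zt t r (Suc m) = Zt t r m * ?den" by (simp add: Zt_def)
  have "B (tilt t r) (Suc m) k * Zt t r (Suc m)
     = ((1 - tilt t r m) * ?den) * (B (tilt t r) m k * Zt t r m) + (tilt t r m * ?den) * (B (tilt t r) m (k-1) * Zt t r m)"
    unfolding Z by (simp add: algebra_simps)
  also have "\<dots> = (1 - ?q) * (t ^ nat k * B r m k) + ?q * t * (t ^ nat (k-1) * B r m (k-1))"
    unfolding a b Suc.IH[OF v] ..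
  also have "?q * t * (t ^ nat (k-1) * B r m (k-1)) = ?q * (t ^ nat k * B r m (k-1))"
  proof (cases "k \<ge> 1")
    case True
    then have "nat k = Suc (nat (k-1))" by simp
    then show ?thesis by (simp add: algebra_simps)
  next
    case False
    then show ?thesis by (simp add: B_neg)
  qed
  finally show ?case by (simp add: algebra_simps)
qed


definition pois :: "real \<Rightarrow> nat \<Rightarrow> real" where
  "pois lam j = exp (- lam) * lam ^ j / fact j"

definition vinf :: "(nat \<Rightarrow> real) \<Rightarrow> bool" where
  "vinf q \<longleftrightarrow> (\<forall>i. 0 \<le> q i \<and> q i \<le> 1) \<and> summable q"

lemma vinf_valid: "vinf q \<Longrightarrow> valid q m"
  by (auto simp: vinf_def valid_def)

lemma B_convergent:
  assumes "vinf q" shows "convergent (\<lambda>n. B q n k)"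
proof -
  have v: "\<And>m. valid q m" using assms by (rule vinf_valid)
  have sq: "summable q" using assms by (simp add: vinf_def)
  have d: "norm (B q (Suc n) k - B q n k) \<le> q n" for n
  proof -
    have "B q (Suc n) k - B q n k = q n * (B q n (k-1) - B q n k)" by (simp add: algebra_simps)
    moreover have "\<bar>B q n (k-1) - B q n k\<bar> \<le> 1"
      using B_nonneg[OF v, of n] B_le1[OF v, of n] by (simp add: abs_le_iff) (smt (verit) B_le1 B_nonneg v)
    moreover have "0 \<le> q n" using assms by (simp add: vinf_def)
    ultimately show ?thesis by (simp add: abs_mult mult_left_le)
  qed
  have "summable (\<lambda>n. B q (Suc n) k - B q n k)"
    by (rule summable_comparison_test[OF _ sq]) (use d in blast)
  then have "(\<lambda>n. \<Sum>i<n. B q (Suc i) k - B q i k) \<longlonglongrightarrow> (\<Sum>n. B q (Suc n) k - B q n k)"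
    by (rule summable_LIMSEQ)
  then have "(\<lambda>n. B q n k - B q 0 k) \<longlonglongrightarrow> (\<Sum>n. B q (Suc n) k - B q n k)"
    by (simp only: sum_lessThan_telescope[of "\<lambda>i. B q i k"])
  then have "(\<lambda>n. (B q n k - B q 0 k) + B q 0 k) \<longlonglongrightarrow> (\<Sum>n. B q (Suc n) k - B q n k) + B q 0 k"
    by (intro tendsto_add tendsto_const)
  then show ?thesis by (auto simp: convergent_def)
qed

definition BL :: "(nat \<Rightarrow> real) \<Rightarrow> int \<Rightarrow> real" where
  "BL q k = (if k < 0 then 0 else bern_law q (nat k))"

lemma BL_lim: assumes "vinf q" shows "(\<lambda>n. B q n k) \<longlonglongrightarrow> BL q k"
proof (cases "k < 0")
  case True then show ?thesis by (simp add: B_neg BL_def)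
next
  case False
  have "bern_law q (nat k) = lim (\<lambda>n. B q n k)"
    using False by (simp add: bern_law_def bern_fin_B)
  then show ?thesis using False B_convergent[OF assms, of k]
    by (simp add: BL_def convergent_LIMSEQ_iff)
qed

definition F :: "real \<Rightarrow> (nat \<Rightarrow> real) \<Rightarrow> int \<Rightarrow> real" where
  "F lam q k = (if k < 0 then 0 else ebs_pmf lam q (nat k))"

lemma F_nat: "F lam q (int j) = ebs_pmf lam q j" by (simp add: F_def)

lemma ebs_pois: "ebs_pmf lam q K = (\<Sum>j\<le>K. BL q (int j) * pois lam (K - j))"
  by (simp add: ebs_pmf_def pois_def BL_def mult_ac)

definition tau :: "(nat \<Rightarrow> real) \<Rightarrow> nat \<Rightarrow> real" where
  "tau q n = (\<Sum>j. q (j + n))"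

definition A :: "real \<Rightarrow> (nat \<Rightarrow> real) \<Rightarrow> nat \<Rightarrow> nat \<Rightarrow> real" where
  "A lam q n i = (if i < n then q i else if i = n then tau q n else if i \<le> 2*n then lam / real n else 0)"

abbreviation M :: "nat \<Rightarrow> nat" where "M n \<equiv> Suc n + n"

lemma tau_lim: "summable q \<Longrightarrow> tau q \<longlonglongrightarrow> 0"
  unfolding tau_def by (rule suminf_exist_split2)

lemma tau_nonneg: "vinf q \<Longrightarrow> 0 \<le> tau q n"
  unfolding tau_def vinf_def by (intro suminf_nonneg summable_ignore_initial_segment) auto

lemma pois_lim: "(\<lambda>n. of_nat (n choose i) * (lam / real n) ^ i * (1 - lam / real n) ^ (n - i)) \<longlonglongrightarrow> pois lam i"
proof -
  define P where "P n = (\<Prod>l = 0..<i. (real (n - l) / real n) / real (i - l))" for n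
  have P: "P \<longlonglongrightarrow> (\<Prod>l = 0..<i. 1 / real (i - l))"
    unfolding P_def
  proof (intro tendsto_prod tendsto_divide tendsto_const)
    fix l assume "l \<in> {0..<i}"
    have "(\<lambda>n. 1 - real l / real n) \<longlonglongrightarrow> 1 - 0" by (intro tendsto_intros)
    moreover have "eventually (\<lambda>n. 1 - real l / real n = real (n - l) / real n) sequentially"
      using eventually_ge_at_top[of "Suc l"]
      by eventually_elim (simp add: of_nat_diff field_simps)
    ultimately show "(\<lambda>n. real (n - l) / real n) \<longlonglongrightarrow> 1" using Lim_transform_eventually by fastforce
  qed auto
  have pf: "(\<Prod>l = 0..<i. 1 / real (i - l)) = 1 / fact i"
    by (simp add: fact_prod_rev prod_dividef)
  have E: "(\<lambda>n. (1 - lam / real n) ^ n) \<longlonglongrightarrow> exp (- lam)"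
    using tendsto_exp_limit_sequentially[of "- lam"] by simp
  have E2: "(\<lambda>n. (1 - lam / real n) ^ i) \<longlonglongrightarrow> (1 - 0) ^ i"
    by (intro tendsto_intros)
  have lim: "(\<lambda>n. lam ^ i * P n * (1 - lam / real n) ^ n / (1 - lam / real n) ^ i) \<longlonglongrightarrow> lam ^ i * (1 / fact i) * exp (- lam) / (1 - 0) ^ i"
    using P pf E E2 by (intro tendsto_intros) auto
  have ev: "eventually (\<lambda>n. lam ^ i * P n * (1 - lam / real n) ^ n / (1 - lam / real n) ^ i
     = of_nat (n choose i) * (lam / real n) ^ i * (1 - lam / real n) ^ (n - i)) sequentially"
  proof -
    obtain N :: nat where N: "real N > \<bar>lam\<bar>" using reals_Archimedean2 by blast
    show ?thesis using eventually_ge_at_top[of "max (Suc i) (Suc N)"]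
    proof eventually_elim
      case (elim n)
      then have ni: "i \<le> n" and n0: "n > 0" and nl: "real n > \<bar>lam\<bar>" using N by auto
      then have nz: "1 - lam / real n \<noteq> 0" by (auto simp: field_simps)
      have c: "of_nat (n choose i) = (\<Prod>l = 0..<i. real (n - l) / real (i - l))"
        using binomial_altdef_of_nat[OF ni] by simp
      have "P n = (\<Prod>l = 0..<i. (real (n - l) / real (i - l)) / real n)"
        unfolding P_def by (intro prod.cong refl) simp
      also have "\<dots> = (\<Prod>l = 0..<i. real (n - l) / real (i - l)) / (\<Prod>l = 0..<i. real n)"
        by (rule prod_dividef)
      also have "(\<Prod>l = 0..<i. real n) = real n ^ i" by simp
      finally have "P n = (\<Prod>l = 0..<i. real (n - l) / real (i - l)) / real n ^ i" .
      then have "P n * lam ^ i = of_nat (n choose i) * (lam / real n) ^ i"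
        using c n0 by (simp add: power_divide field_simps)
      moreover have "(1 - lam / real n) ^ (n - i) = (1 - lam / real n) ^ n / (1 - lam / real n) ^ i"
        using power_diff[OF nz ni] by simp
      ultimately show ?case by (simp add: field_simps)
    qed
  qed
  have "lam ^ i * (1 / fact i) * exp (- lam) / (1 - 0) ^ i = pois lam i"
    by (simp add: pois_def)
  then show ?thesis using Lim_transform_eventually[OF lim ev] by simp
qed

lemma sum_split_add: "(\<Sum>i<m+n. f i) = (\<Sum>i<m. f i) + (\<Sum>i<n. f (m+i))" for f :: "nat \<Rightarrow> real"
  by (induction n) (auto simp: add_ac)

lemma A_mean:
  assumes "vinf q" "n \<ge> 1"
  shows "mu (A lam q n) (M n) = lam + suminf q"
proof -
  have "mu (A lam q n) (M n) = (\<Sum>i<Suc n. A lam q n i) + (\<Sum>i<n. A lam q n (Suc n + i))"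
    by (rule sum_split_add)
  also have "(\<Sum>i<Suc n. A lam q n i) = (\<Sum>i<n. q i) + tau q n"
    by (simp add: A_def)
  also have "(\<Sum>i<n. A lam q n (Suc n + i)) = lam"
    using assms(2) by (simp add: A_def)
  also have "suminf q = tau q n + (\<Sum>i<n. q i)"
    using assms(1) by (simp add: vinf_def tau_def suminf_split_initial_segment)
  ultimately show ?thesis by simp
qed

lemma A_valid_ev:
  assumes "vinf q" "lam \<ge> 0"
  shows "eventually (\<lambda>n. valid (A lam q n) (M n)) sequentially"
proof -
  obtain N :: nat where N: "real N > lam" using reals_Archimedean2 by blast
  have "eventually (\<lambda>n. tau q n < 1) sequentially"
    using tau_lim[of q] assms(1) by (auto simp: vinf_def order_tendsto_iff)
  then show ?thesis using eventually_ge_at_top[of "Suc N"]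
  proof eventually_elim
    case (elim n)
    then have "lam / real n \<le> 1" using N by (simp add: field_simps)
    then show ?case using elim tau_nonneg[OF assms(1), of n] assms
      by (auto simp: valid_def A_def vinf_def)
  qed
qed

lemma A_le_ev:
  assumes "vinf q" "lam \<ge> 0" "0 < c" "\<forall>i. q i \<le> c"
  shows "eventually (\<lambda>n. \<forall>i<M n. A lam q n i \<le> c) sequentially"
proof -
  obtain N :: nat where N: "real N > lam / c" using reals_Archimedean2 by blast
  have "eventually (\<lambda>n. tau q n < c) sequentially"
    using tau_lim[of q] assms by (auto simp: vinf_def order_tendsto_iff)
  then show ?thesis using eventually_ge_at_top[of "Suc N"]
  proof eventually_elim
    case (elim n)
    then have "lam / c < real n" using N by simp
    then have "lam / real n \<le> c" using assms(3) elim by (simp add: field_simps)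
    then show ?case using elim assms by (auto simp: A_def)
  qed
qed

lemma A_upd: "i < n \<Longrightarrow> A lam (q(i:=0)) n = (A lam q n)(i := 0)"
  by (rule ext) (auto simp: A_def tau_def)

lemma B_A_Suc: "B (A lam q n) (Suc n) j = (1 - tau q n) * B q n j + tau q n * B q n (j-1)"
proof -
  have "B (A lam q n) n j' = B q n j'" for j' by (intro B_cong) (simp add: A_def)
  then show ?thesis by (simp add: A_def)
qed

lemma B_A_tail: "B (\<lambda>i. A lam q n (Suc n + i)) n j = B (\<lambda>_. lam / real n) n j"
  by (intro B_cong) (simp add: A_def)

lemma approx_conv:
  assumes "vinf q"
  shows "(\<lambda>n. B (A lam q n) (M n) k) \<longlonglongrightarrow> F lam q k"
proof (cases "k < 0")
  case True then show ?thesis by (simp add: B_neg F_def)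
next
  case False
  then obtain K where K: "k = int K" by (metis nonneg_int_cases not_less)
  define T where "T n j = ((1 - tau q n) * B q n (int j) + tau q n * B q n (int j - 1))
      * (of_nat (n choose (K - j)) * (lam / real n) ^ (K - j) * (1 - lam / real n) ^ (n - (K - j)))" for n j
  have lim: "(\<lambda>n. \<Sum>j\<le>K. T n j) \<longlonglongrightarrow> (\<Sum>j\<le>K. ((1 - 0) * BL q (int j) + 0 * BL q (int j - 1)) * pois lam (K - j))"
  proof (intro tendsto_sum)
    fix j
    have a: "(\<lambda>n. (1 - tau q n) * B q n (int j) + tau q n * B q n (int j - 1)) \<longlonglongrightarrow> (1 - 0) * BL q (int j) + 0 * BL q (int j - 1)"
      using tau_lim[of q] assms BL_lim[OF assms] by (intro tendsto_intros) (auto simp: vinf_def)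
    show "(\<lambda>n. T n j) \<longlonglongrightarrow> ((1 - 0) * BL q (int j) + 0 * BL q (int j - 1)) * pois lam (K - j)"
      unfolding T_def by (rule tendsto_mult[OF a pois_lim])
  qed
  have ev: "eventually (\<lambda>n. (\<Sum>j\<le>K. T n j) = B (A lam q n) (M n) k) sequentially"
    using eventually_ge_at_top[of K]
  proof eventually_elim
    case (elim n)
    have "B (A lam q n) (M n) k = (\<Sum>j\<le>Suc n. B (A lam q n) (Suc n) (int j) * B (\<lambda>i. A lam q n (Suc n + i)) n (k - int j))"
      by (rule B_conv)
    also have "\<dots> = (\<Sum>j\<le>K. B (A lam q n) (Suc n) (int j) * B (\<lambda>i. A lam q n (Suc n + i)) n (k - int j))"
      using elim K by (intro sum.mono_neutral_right) (auto simp: B_neg)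
    also have "\<dots> = (\<Sum>j\<le>K. T n j)"
    proof (intro sum.cong refl)
      fix j assume "j \<in> {..K}"
      then have "k - int j = int (K - j)" using K by auto
      then show "B (A lam q n) (Suc n) (int j) * B (\<lambda>i. A lam q n (Suc n + i)) n (k - int j) = T n j"
        unfolding T_def B_A_Suc B_A_tail by (simp add: B_binom)
    qed
    finally show ?case by simp
  qed
  have "(\<Sum>j\<le>K. ((1 - 0) * BL q (int j) + 0 * BL q (int j - 1)) * pois lam (K - j)) = F lam q k"
    using K by (simp add: F_def ebs_pois)
  then show ?thesis using Lim_transform_eventually[OF lim ev] by simp
qed


declare B.simps(2)[simp del]

lemma vinf_upd: "vinf q \<Longrightarrow> vinf (q(i:=0))"
  unfolding vinf_def
proof (intro conjI)
  assume H: "(\<forall>i. 0 \<le> q i \<and> q i \<le> 1) \<and> summable q"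
  show "\<forall>j. 0 \<le> (q(i:=0)) j \<and> (q(i:=0)) j \<le> 1" using H by auto
  show "summable (q(i:=0))"
    by (rule summable_comparison_test[of _ q]) (use H in auto)
qed

lemma suminf_upd: "vinf q \<Longrightarrow> suminf (q(i:=0)) = suminf q - q i"
proof -
  assume v: "vinf q"
  have s: "summable q" using v by (simp add: vinf_def)
  have "(\<lambda>j. q j - (if j = i then q i else 0)) sums (suminf q - q i)"
    by (intro sums_diff summable_sums s sums_single)
  moreover have "(\<lambda>j. q j - (if j = i then q i else 0)) = q(i:=0)" by auto
  ultimately show ?thesis by (simp add: sums_iff)
qed

lemma approx_conv_upd:
  assumes "vinf q" "i < n0"
  shows "(\<lambda>n. B ((A lam q n)(i:=0)) (M n) k) \<longlonglongrightarrow> F lam (q(i:=0)) k"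
proof -
  have "(\<lambda>n. B (A lam (q(i:=0)) n) (M n) k) \<longlonglongrightarrow> F lam (q(i:=0)) k"
    by (rule approx_conv[OF vinf_upd[OF assms(1)]])
  moreover have "eventually (\<lambda>n. B (A lam (q(i:=0)) n) (M n) k = B ((A lam q n)(i:=0)) (M n) k) sequentially"
    using eventually_gt_at_top[of i] by eventually_elim (simp add: A_upd)
  ultimately show ?thesis by (rule Lim_transform_eventually)
qed

lemma ev_good:
  assumes "vinf q" "lam \<ge> 0"
  shows "eventually (\<lambda>n. valid (A lam q n) (M n) \<and> mu (A lam q n) (M n) = lam + suminf q) sequentially"
  using A_valid_ev[OF assms] eventually_ge_at_top[of 1]
  by eventually_elim (use A_mean[OF assms(1)] in auto)

lemma lim_le_ev: "X \<longlonglongrightarrow> x \<Longrightarrow> Y \<longlonglongrightarrow> y \<Longrightarrow> eventually (\<lambda>n. X n \<le> Y n) sequentially \<Longrightarrow> x \<le> y"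
  for X Y :: "nat \<Rightarrow> real"
  by (rule tendsto_le[OF trivial_limit_sequentially]) auto

lemma F_nonneg: assumes "vinf q" "lam \<ge> 0" shows "0 \<le> F lam q k"
proof (rule lim_le_ev[OF tendsto_const approx_conv[OF assms(1)]])
  show "eventually (\<lambda>n. 0 \<le> B (A lam q n) (M n) k) sequentially"
    using ev_good[OF assms] by eventually_elim (auto intro: B_nonneg)
qed

lemma IL0: assumes "vinf q" "lam \<ge> 0" "of_int k \<le> lam + suminf q"
  shows "F lam q (k-1) \<le> F lam q k"
proof (rule lim_le_ev[OF approx_conv[OF assms(1)] approx_conv[OF assms(1)]])
  show "eventually (\<lambda>n. B (A lam q n) (M n) (k-1) \<le> B (A lam q n) (M n) k) sequentially"
    using ev_good[OF assms(1,2)] by eventually_elim (rule L0, use assms(3) in auto)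
qed

lemma ILq0: assumes "vinf q" "lam \<ge> 0" "of_int k \<le> lam + suminf q"
  shows "of_int k * (F lam q k - F lam q (k-1)) \<ge> (lam + suminf q - of_int k) * F lam q (k-1)"
proof (rule lim_le_ev)
  show "(\<lambda>n. (lam + suminf q - of_int k) * B (A lam q n) (M n) (k-1)) \<longlonglongrightarrow> (lam + suminf q - of_int k) * F lam q (k-1)"
    using approx_conv[OF assms(1)] by (intro tendsto_intros)
  show "(\<lambda>n. of_int k * (B (A lam q n) (M n) k - B (A lam q n) (M n) (k-1))) \<longlonglongrightarrow> of_int k * (F lam q k - F lam q (k-1))"
    using approx_conv[OF assms(1)] by (intro tendsto_intros)
  show "eventually (\<lambda>n. (lam + suminf q - of_int k) * B (A lam q n) (M n) (k-1) \<le> of_int k * (B (A lam q n) (M n) k - B (A lam q n) (M n) (k-1))) sequentially"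
    using ev_good[OF assms(1,2)]
  proof eventually_elim
    case (elim n)
    then have v: "valid (A lam q n) (M n)" and e: "mu (A lam q n) (M n) = lam + suminf q" by blast+
    have le: "of_int k \<le> mu (A lam q n) (M n)" unfolding e by (rule assms(3))
    show ?case using Lq0[OF v le] unfolding e .
  qed
qed

lemma ILq: assumes "vinf q" "lam \<ge> 0" "of_int k \<le> lam + suminf q"
  shows "of_int k * (F lam q k - F lam q (k-1)) \<ge> (lam + suminf q - of_int k) * F lam q (k-1)
      + q i ^ 2 * (F lam (q(i:=0)) (k-1) - F lam (q(i:=0)) (k-1-1))"
proof (rule lim_le_ev)
  show "(\<lambda>n. (lam + suminf q - of_int k) * B (A lam q n) (M n) (k-1)
      + q i ^ 2 * (B ((A lam q n)(i:=0)) (M n) (k-1) - B ((A lam q n)(i:=0)) (M n) (k-1-1)))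
    \<longlonglongrightarrow> (lam + suminf q - of_int k) * F lam q (k-1)
      + q i ^ 2 * (F lam (q(i:=0)) (k-1) - F lam (q(i:=0)) (k-1-1))"
    using approx_conv[OF assms(1)] approx_conv_upd[OF assms(1) lessI] by (intro tendsto_intros)
  show "(\<lambda>n. of_int k * (B (A lam q n) (M n) k - B (A lam q n) (M n) (k-1)))
    \<longlonglongrightarrow> of_int k * (F lam q k - F lam q (k-1))"
    using approx_conv[OF assms(1)] by (intro tendsto_intros)
  show "eventually (\<lambda>n. (lam + suminf q - of_int k) * B (A lam q n) (M n) (k-1)
      + q i ^ 2 * (B ((A lam q n)(i:=0)) (M n) (k-1) - B ((A lam q n)(i:=0)) (M n) (k-1-1))
     \<le> of_int k * (B (A lam q n) (M n) k - B (A lam q n) (M n) (k-1))) sequentially"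
    using ev_good[OF assms(1,2)] eventually_gt_at_top[of i]
  proof eventually_elim
    case (elim n)
    then have "i < M n" "A lam q n i = q i" by (auto simp: A_def)
    then show ?case using Lq[of "A lam q n" "M n" k i] elim assms(3) by simp
  qed
qed

lemma IWU: assumes "vinf q" "lam \<ge> 0" "0 < c" "c \<le> 1" "\<forall>i. q i \<le> c"
    "lam + suminf q + c \<le> of_int k + 1"
  shows "F lam q (k+1) \<le> F lam q k"
proof (rule lim_le_ev[OF approx_conv[OF assms(1)] approx_conv[OF assms(1)]])
  show "eventually (\<lambda>n. B (A lam q n) (M n) (k+1) \<le> B (A lam q n) (M n) k) sequentially"
    using ev_good[OF assms(1,2)] A_le_ev[OF assms(1,2,3,5)]
    by eventually_elim (rule WU_fin[where c=c], use assms in auto)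
qed

lemma IPF2: assumes "vinf q" "lam \<ge> 0" "x \<le> y"
  shows "F lam q (x-1) * F lam q (y+1) \<le> F lam q x * F lam q y"
proof (rule lim_le_ev[OF tendsto_mult[OF approx_conv[OF assms(1)] approx_conv[OF assms(1)]]
       tendsto_mult[OF approx_conv[OF assms(1)] approx_conv[OF assms(1)]]])
  show "eventually (\<lambda>n. B (A lam q n) (M n) (x-1) * B (A lam q n) (M n) (y+1) \<le> B (A lam q n) (M n) x * B (A lam q n) (M n) y) sequentially"
    using ev_good[OF assms(1,2)] by eventually_elim (rule PF2, use assms in auto)
qed

lemma Iremove: assumes "vinf q" "lam \<ge> 0"
  shows "F lam q k = (1 - q i) * F lam (q(i:=0)) k + q i * F lam (q(i:=0)) (k-1)"
proof -
  have l1: "(\<lambda>n. (1 - q i) * B ((A lam q n)(i:=0)) (M n) k + q i * B ((A lam q n)(i:=0)) (M n) (k-1))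
      \<longlonglongrightarrow> (1 - q i) * F lam (q(i:=0)) k + q i * F lam (q(i:=0)) (k-1)"
    using approx_conv_upd[OF assms(1) lessI] by (intro tendsto_intros)
  have ev: "eventually (\<lambda>n. (1 - q i) * B ((A lam q n)(i:=0)) (M n) k + q i * B ((A lam q n)(i:=0)) (M n) (k-1)
      = B (A lam q n) (M n) k) sequentially"
    using eventually_gt_at_top[of i]
  proof eventually_elim
    case (elim n)
    then have "i < M n" "A lam q n i = q i" by (auto simp: A_def)
    then show ?case using B_remove[of i "M n" "A lam q n" k] by simp
  qed
  show ?thesis using LIMSEQ_unique[OF approx_conv[OF assms(1)] Lim_transform_eventually[OF l1 ev]] .
qed

lemma mass_fin: assumes "valid r m"
  shows "mu r m \<ge> (of_nat K + 1) * (1 - (\<Sum>j\<le>K. B r m (int j)))"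
proof -
  define N where "N = max K m"
  have s1: "(\<Sum>j\<le>N. B r m (int j)) = 1" using B_sum1[OF assms] by (simp add: N_def)
  have s2: "(\<Sum>j\<le>N. of_nat j * B r m (int j)) = mu r m" using B_mean[OF assms] by (simp add: N_def)
  have KN: "{..K} \<subseteq> {..N}" by (auto simp: N_def)
  have split: "(\<Sum>j\<le>N. f j) = (\<Sum>j\<le>K. f j) + (\<Sum>j\<in>{..N}-{..K}. f j)" for f :: "nat \<Rightarrow> real"
    using sum.subset_diff[OF KN] by (simp add: add.commute)
  have "(\<Sum>j\<in>{..N}-{..K}. (of_nat K + 1) * B r m (int j)) \<le> (\<Sum>j\<in>{..N}-{..K}. of_nat j * B r m (int j))"
    by (intro sum_mono mult_right_mono B_nonneg[OF assms]) auto
  moreover have "(\<Sum>j\<le>K. of_nat j * B r m (int j)) \<ge> 0"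
    by (intro sum_nonneg mult_nonneg_nonneg B_nonneg[OF assms]) auto
  ultimately have "mu r m \<ge> (of_nat K + 1) * (\<Sum>j\<in>{..N}-{..K}. B r m (int j))"
    using s2 split[of "\<lambda>j. of_nat j * B r m (int j)"] by (simp add: sum_distrib_left)
  moreover have "(\<Sum>j\<in>{..N}-{..K}. B r m (int j)) = 1 - (\<Sum>j\<le>K. B r m (int j))"
    using s1 split[of "\<lambda>j. B r m (int j)"] by simp
  ultimately show ?thesis by simp
qed

lemma Ilow: assumes "vinf q" "lam \<ge> 0" "\<forall>j\<le>K. F lam q (int j) = 0"
  shows "lam + suminf q \<ge> of_nat K + 1"
proof -
  have "(\<lambda>n. (of_nat K + 1) * (1 - (\<Sum>j\<le>K. B (A lam q n) (M n) (int j)))) \<longlonglongrightarrow> (of_nat K + 1) * (1 - (\<Sum>j\<le>K. F lam q (int j)))"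
    using approx_conv[OF assms(1)] by (intro tendsto_intros) auto
  moreover have "eventually (\<lambda>n. (of_nat K + 1) * (1 - (\<Sum>j\<le>K. B (A lam q n) (M n) (int j))) \<le> lam + suminf q) sequentially"
    using ev_good[OF assms(1,2)]
  proof eventually_elim
    case (elim n)
    then have v: "valid (A lam q n) (M n)" and e: "mu (A lam q n) (M n) = lam + suminf q" by blast+
    show ?case using mass_fin[OF v, of K] unfolding e .
  qed
  ultimately have "(of_nat K + 1) * (1 - (\<Sum>j\<le>K. F lam q (int j))) \<le> lam + suminf q"
    by (rule lim_le_ev[OF _ tendsto_const])
  then show ?thesis using assms(3) by simp
qed


declare B.simps(2)[simp del]

lemma tc_props:
  fixes a t :: real
  assumes "0 \<le> a" "a \<le> 1" "1 \<le> t"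
  shows "0 \<le> a * t / (1 - a + a * t)" "a * t / (1 - a + a * t) \<le> 1"
    "a * t / (1 - a + a * t) \<le> t * a"
proof -
  have d: "1 \<le> 1 - a + a * t" using tilt_den[OF assms(1,3)] .
  show "0 \<le> a * t / (1 - a + a * t)" using assms d by simp
  show "a * t / (1 - a + a * t) \<le> 1" using assms d by (simp add: field_simps)
  have "t * a * 1 \<le> t * a * (1 - a + a * t)" using assms d
    by (intro mult_left_mono) auto
  then have "a * t \<le> t * a * (1 - a + a * t)" by (simp add: mult.commute)
  then show "a * t / (1 - a + a * t) \<le> t * a" using d by (simp add: divide_le_eq)
qed

lemma tc_mono:
  fixes a b t :: real
  assumes "0 \<le> a" "a \<le> b" "b \<le> 1" "1 \<le> t"
  shows "a * t / (1 - a + a * t) \<le> b * t / (1 - b + b * t)"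
proof -
  have da: "1 \<le> 1 - a + a * t" using tilt_den[OF assms(1,4)] .
  have db: "1 \<le> 1 - b + b * t" using tilt_den[of b t] assms by simp
  have "a * t * (1 - b + b * t) \<le> b * t * (1 - a + a * t)"
  proof -
    have "a * t * (1 - b + b * t) - b * t * (1 - a + a * t) = t * (a - b)" by (simp add: algebra_simps)
    moreover have "t * (a - b) \<le> 0" using assms by (simp add: mult_nonneg_nonpos)
    ultimately show ?thesis by simp
  qed
  then show ?thesis using da db by (simp add: divide_simps)
qed

lemma tc_pos: "0 < a \<Longrightarrow> 1 \<le> t \<Longrightarrow> 0 < a * t / (1 - a + a * t)" for a t :: real
proof -
  assume a: "0 < a" and t: "1 \<le> t"
  have d: "1 \<le> 1 - a + a * t" using tilt_den[of a t] a t by simp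
  have "0 < 1 - a + a * t" using d by linarith
  then show ?thesis using a t by simp
qed

lemma vinf_tilt:
  assumes "vinf q" "1 \<le> t"
  shows "vinf (tilt t q)" "suminf (tilt t q) \<le> t * suminf q"
proof -
  have p: "0 \<le> tilt t q i" "tilt t q i \<le> 1" "tilt t q i \<le> t * q i" for i
    using tc_props[of "q i" t] assms by (auto simp: vinf_def tilt_def)
  have s: "summable q" using assms by (simp add: vinf_def)
  have s2: "summable (tilt t q)"
    by (rule summable_comparison_test[of _ "\<lambda>i. t * q i"]) (use p s in \<open>auto intro: summable_mult\<close>)
  show "vinf (tilt t q)" using p s2 by (simp add: vinf_def)
  show "suminf (tilt t q) \<le> t * suminf q"
    using suminf_le[OF p(3) s2 summable_mult[OF s]] suminf_mult[OF s] by simp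
qed

lemma Zt_conv:
  assumes "vinf q" "1 \<le> t"
  shows "\<exists>Z. Zt t q \<longlonglongrightarrow> Z \<and> 1 \<le> Z"
proof -
  have f1: "1 \<le> 1 - q i + q i * t" for i using tilt_den[of "q i" t] assms by (simp add: vinf_def)
  have ge1: "1 \<le> Zt t q n" for n unfolding Zt_def
    using f1 by (intro prod_ge_1) auto
  have inc: "incseq (Zt t q)"
  proof (rule incseq_SucI)
    fix n
    have "Zt t q n * 1 \<le> Zt t q n * (1 - q n + q n * t)"
      using ge1[of n] f1[of n] by (intro mult_left_mono) auto
    then show "Zt t q n \<le> Zt t q (Suc n)" by (simp add: Zt_def)
  qed
  have s: "summable q" and q0: "\<And>i. 0 \<le> q i" using assms by (auto simp: vinf_def)
  have bnd: "Zt t q n \<le> exp ((t - 1) * suminf q)" for n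
  proof -
    have "Zt t q n \<le> (\<Prod>i<n. exp (q i * (t - 1)))"
      unfolding Zt_def
    proof (rule prod_mono)
      fix i assume "i \<in> {..<n}"
      have "1 + q i * (t - 1) \<le> exp (q i * (t - 1))" by (rule exp_ge_add_one_self)
      then show "0 \<le> 1 - q i + q i * t \<and> 1 - q i + q i * t \<le> exp (q i * (t - 1))"
        using f1[of i] by (simp add: algebra_simps)
    qed
    also have "\<dots> = exp (\<Sum>i<n. q i * (t - 1))" by (simp add: exp_sum)
    also have "(\<Sum>i<n. q i * (t - 1)) \<le> (t - 1) * suminf q"
    proof -
      have "(\<Sum>i<n. q i) * (t - 1) \<le> suminf q * (t - 1)"
        using sum_le_suminf[OF s, of "{..<n}"] q0 assms(2) by (intro mult_right_mono) auto
      moreover have eq: "(\<Sum>i<n. q i * (t - 1)) = (\<Sum>i<n. q i) * (t - 1)"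
        by (rule sum_distrib_right[symmetric])
      ultimately show ?thesis by (simp add: mult.commute)
    qed
    finally show ?thesis by simp
  qed
  have "convergent (Zt t q)"
  proof (rule Bseq_mono_convergent)
    show "Bseq (Zt t q)"
    proof (rule BseqI'[where K="exp ((t - 1) * suminf q)"])
      fix n
      have "0 \<le> Zt t q n" using ge1[of n] by linarith
      then show "norm (Zt t q n) \<le> exp ((t - 1) * suminf q)" using bnd[of n] by simp
    qed
    show "\<forall>m n. m \<le> n \<longrightarrow> Zt t q m \<le> Zt t q n" using inc by (auto simp: incseq_def)
  qed
  then obtain Z where Z: "Zt t q \<longlonglongrightarrow> Z" by (auto simp: convergent_def)
  moreover have "1 \<le> Z" using Z ge1 by (intro LIMSEQ_le_const) auto
  ultimately show ?thesis by blast
qed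

lemma F_tilt:
  assumes v: "vinf q" and t: "1 \<le> t"
  shows "\<exists>C>0. \<forall>k. F (lam * t) (tilt t q) k = C * t ^ nat k * F lam q k"
proof -
  obtain Z where Z: "Zt t q \<longlonglongrightarrow> Z" "1 \<le> Z" using Zt_conv[OF v t] by blast
  have v': "vinf (tilt t q)" using vinf_tilt[OF v t] by simp
  have BLt: "BL (tilt t q) k * Z = t ^ nat k * BL q k" for k
  proof -
    have "(\<lambda>n. B (tilt t q) n k * Zt t q n) \<longlonglongrightarrow> BL (tilt t q) k * Z"
      using BL_lim[OF v'] Z(1) by (intro tendsto_intros)
    moreover have "(\<lambda>n. B (tilt t q) n k * Zt t q n) = (\<lambda>n. t ^ nat k * B q n k)"
      using B_tilt[OF vinf_valid[OF v] t] by auto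
    moreover have "(\<lambda>n. t ^ nat k * B q n k) \<longlonglongrightarrow> t ^ nat k * BL q k"
      using BL_lim[OF v] by (intro tendsto_intros)
    ultimately show ?thesis using LIMSEQ_unique by metis
  qed
  define C where "C = exp (lam - lam * t) / Z"
  have C: "C > 0" using Z by (simp add: C_def)
  have "F (lam * t) (tilt t q) k = C * t ^ nat k * F lam q k" for k
  proof (cases "k < 0")
    case True then show ?thesis by (simp add: F_def)
  next
    case False
    then obtain K where K: "k = int K" by (metis nonneg_int_cases not_less)
    have "F (lam * t) (tilt t q) k = (\<Sum>j\<le>K. BL (tilt t q) (int j) * pois (lam * t) (K - j))"
      using K by (simp add: F_def ebs_pois)
    also have "\<dots> = (\<Sum>j\<le>K. C * t ^ K * (BL q (int j) * pois lam (K - j)))"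
    proof (intro sum.cong refl)
      fix j assume "j \<in> {..K}"
      then have jK: "j \<le> K" by simp
      have b: "BL (tilt t q) (int j) = t ^ j * BL q (int j) / Z"
        using BLt[of "int j"] Z(2) by (simp add: field_simps)
      have e: "exp (- (lam * t)) = exp (lam - lam * t) * exp (- lam)"
        by (simp add: exp_add[symmetric])
      have p: "pois (lam * t) (K - j) = exp (lam - lam * t) * t ^ (K - j) * pois lam (K - j)"
        unfolding pois_def power_mult_distrib e by (simp add: field_simps)
      have tt: "t ^ j * t ^ (K - j) = t ^ K" using jK by (simp add: power_add[symmetric])
      show "BL (tilt t q) (int j) * pois (lam * t) (K - j) = C * t ^ K * (BL q (int j) * pois lam (K - j))"
      proof -
        have "t ^ j * BL q (int j) / Z * (exp (lam - lam * t) * t ^ (K - j) * pois lam (K - j))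
          = exp (lam - lam * t) / Z * (t ^ j * t ^ (K - j)) * (BL q (int j) * pois lam (K - j))"
          by (simp add: field_simps)
        then show ?thesis unfolding b p C_def tt .
      qed
    qed
    also have "\<dots> = C * t ^ K * F lam q k"
      using K by (simp add: F_def ebs_pois sum_distrib_left)
    finally show ?thesis using K by simp
  qed
  then show ?thesis using C by blast
qed

lemma SU:
  assumes v: "vinf q" and lam: "lam \<ge> 0" and c: "0 < c" "c \<le> 1" and le: "\<forall>i. q i \<le> c"
    and mu: "lam + suminf q + c < of_int k + 1"
  shows "F lam q (k+1) < F lam q k \<or> (F lam q k = 0 \<and> F lam q (k+1) = 0)"
proof -
  have s0: "0 \<le> suminf q" using v by (auto simp: vinf_def intro: suminf_nonneg)
  define s where "s = lam + suminf q + c"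
  have spos: "s > 0" using s0 lam c by (simp add: s_def)
  define t where "t = (of_int k + 1) / s"
  have t1: "t > 1" using mu spos by (simp add: t_def s_def field_simps)
  have ts: "t * s = of_int k + 1" using spos by (simp add: t_def)
  have k0: "k \<ge> 0" using mu spos by (simp add: s_def)
  define c' where "c' = c * t / (1 - c + c * t)"
  have c': "0 < c'" "c' \<le> 1" "c' \<le> t * c"
    using tc_pos[of c t] tc_props[of c t] c t1 by (auto simp: c'_def)
  have v': "vinf (tilt t q)" and sm: "suminf (tilt t q) \<le> t * suminf q"
    using vinf_tilt[OF v] t1 by auto
  have le': "\<forall>i. tilt t q i \<le> c'"
    using tc_mono[of "q i" c t for i] le v c t1 by (auto simp: tilt_def c'_def vinf_def)
  have "lam * t + suminf (tilt t q) + c' \<le> t * s"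
    using sm c'(3) by (simp add: s_def algebra_simps)
  then have "lam * t + suminf (tilt t q) + c' \<le> of_int k + 1" using ts by simp
  then have W: "F (lam * t) (tilt t q) (k+1) \<le> F (lam * t) (tilt t q) k"
    using IWU[OF v' _ c'(1,2) le'] lam t1 by simp
  obtain C where C: "C > 0" "\<forall>k. F (lam * t) (tilt t q) k = C * t ^ nat k * F lam q k"
    using F_tilt[OF v, of t lam] t1 by auto
  have "nat (k+1) = Suc (nat k)" using k0 by simp
  then have "C * t ^ nat k * (t * F lam q (k+1)) \<le> C * t ^ nat k * F lam q k"
    using W C(2) by (simp add: mult_ac)
  moreover have "C * t ^ nat k > 0" using C(1) t1 by simp
  ultimately have key: "t * F lam q (k+1) \<le> F lam q k"
    by (simp only: mult_le_cancel_left_pos)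
  have nn: "0 \<le> F lam q (k+1)" using F_nonneg[OF v lam] .
  show ?thesis
  proof (cases "F lam q (k+1) > 0")
    case True
    then have "F lam q (k+1) < t * F lam q (k+1)" using t1 by simp
    then show ?thesis using key by simp
  next
    case False
    then have "F lam q (k+1) = 0" using nn by simp
    then show ?thesis using F_nonneg[OF v lam, of k] by auto
  qed
qed


declare B.simps(2)[simp del]

lemma B_shift0: "r 0 = 0 \<Longrightarrow> B r (Suc n) k = B (\<lambda>i. r (Suc i)) n k"
proof -
  assume r0: "r 0 = 0"
  have "B r (1 + n) k = (\<Sum>j\<le>1. B r 1 (int j) * B (\<lambda>i. r (1+i)) n (k - int j))"
    by (rule B_conv)
  also have "\<dots> = B (\<lambda>i. r (Suc i)) n k"
    using r0 by (simp add: B.simps)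
  finally show ?thesis by simp
qed

lemma F_shift0:
  assumes "vinf p"
  shows "F lam (p(0:=0)) k = F lam (\<lambda>i. p (Suc i)) k"
proof -
  have v1: "vinf (p(0:=0))" using vinf_upd[OF assms] .
  have v2: "vinf (\<lambda>i. p (Suc i))"
  proof -
    have "summable (\<lambda>i. p (i + 1))" using assms by (intro summable_ignore_initial_segment) (simp add: vinf_def)
    then show ?thesis using assms by (simp add: vinf_def)
  qed
  have "BL (p(0:=0)) j = BL (\<lambda>i. p (Suc i)) j" for j
  proof -
    have "(\<lambda>n. B (p(0:=0)) (Suc n) j) \<longlonglongrightarrow> BL (p(0:=0)) j"
      using LIMSEQ_Suc[OF BL_lim[OF v1]] .
    moreover have "(\<lambda>n. B (p(0:=0)) (Suc n) j) = (\<lambda>n. B (\<lambda>i. p (Suc i)) n j)"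
      by (rule ext, subst B_shift0) auto
    ultimately show ?thesis using BL_lim[OF v2] LIMSEQ_unique by metis
  qed
  then show ?thesis by (simp add: F_def ebs_pois)
qed

lemma B_ind: "B (\<lambda>i. if i < a then 1 else 0) n k = (if k = int (min n a) then 1 else 0)"
proof (induction n arbitrary: k)
  case 0 then show ?case by simp
next
  case (Suc n)
  show ?case
  proof (cases "n < a")
    case True
    then show ?thesis using Suc.IH[of "k-1"] by (auto simp: B.simps)
  next
    case False
    then show ?thesis using Suc.IH[of k] by (auto simp: B.simps)
  qed
qed

lemma F_ind:
  "F lam (\<lambda>i. if i < a then 1 else 0) (int j) = (if j < a then 0 else pois lam (j - a))"
proof -
  let ?q = "\<lambda>i::nat. if i < a then (1::real) else 0"
  have s: "summable ?q" by (rule summable_finite[of "{..<a}"]) auto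
  have v: "vinf ?q" unfolding vinf_def using s by simp
  have BLq: "BL ?q k = (if k = int a then 1 else 0)" for k
  proof -
    have "(\<lambda>n. B ?q n k) \<longlonglongrightarrow> (if k = int a then 1 else 0)"
    proof (rule Lim_transform_eventually[OF tendsto_const])
      show "eventually (\<lambda>n. (if k = int a then 1 else 0) = B ?q n k) sequentially"
        using eventually_ge_at_top[of a] by eventually_elim (simp add: B_ind)
    qed
    from LIMSEQ_unique[OF BL_lim[OF v] this] show ?thesis .
  qed
  have t: "BL ?q (int i) * pois lam (j - i) = (if i = a then pois lam (j - a) else 0)" for i
    by (simp add: BLq)
  have "F lam ?q (int j) = (\<Sum>i\<le>j. BL ?q (int i) * pois lam (j - i))"
    by (simp add: F_def ebs_pois)
  also have "\<dots> = (\<Sum>i\<le>j. (if i = a then pois lam (j - a) else 0))"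
    by (simp only: t)
  also have "\<dots> = (if j < a then 0 else pois lam (j - a))"
    by (simp add: sum.delta')
  finally show ?thesis .
qed


declare B.simps(2)[simp del]

definition Pm :: "real \<Rightarrow> (nat \<Rightarrow> real) \<Rightarrow> nat \<Rightarrow> bool" where
  "Pm lam q k \<longleftrightarrow> (k = 0 \<or> ebs_pmf lam q (k - 1) \<le> ebs_pmf lam q k) \<and> ebs_pmf lam q k > ebs_pmf lam q (Suc k)"

lemma F_prev: "0 < j \<Longrightarrow> F lam q (int j - 1) = ebs_pmf lam q (j - 1)"
  by (simp add: F_def of_nat_diff nat_diff_distrib)

lemma F_neg1: "F lam q (-1) = 0" by (simp add: F_def)

lemma Pm_F: "Pm lam q k \<longleftrightarrow> (k = 0 \<or> F lam q (int k - 1) \<le> F lam q (int k)) \<and> F lam q (int k) > F lam q (int k + 1)"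
proof -
  have "F lam q (int k + 1) = ebs_pmf lam q (Suc k)" using F_nat[of lam q "Suc k"] by (simp add: add.commute)
  moreover have "k > 0 \<Longrightarrow> F lam q (int k - 1) = ebs_pmf lam q (k - 1)" by (rule F_prev)
  moreover have "F lam q (int k) = ebs_pmf lam q k" by (rule F_nat)
  ultimately show ?thesis by (cases "k = 0") (auto simp: Pm_def)
qed

lemma Pm_unique:
  assumes v: "vinf q" and lam: "lam \<ge> 0" and P1: "Pm lam q j1" and P2: "Pm lam q j2"
  shows "j1 = j2"
proof (rule ccontr)
  assume ne: "j1 \<noteq> j2"
  have main: False if a: "Pm lam q a" and b: "Pm lam q b" and ab: "a < b" for a b
  proof -
    let ?G = "F lam q"
    have a1: "?G (int a) > ?G (int a + 1)" using a by (simp add: Pm_F)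
    have b0: "b \<noteq> 0" using ab by simp
    have b1: "?G (int b - 1) \<le> ?G (int b)" "?G (int b) > ?G (int b + 1)" using b b0 by (auto simp: Pm_F)
    have nn: "\<And>k. 0 \<le> ?G k" using F_nonneg[OF v lam] .
    show False
    proof (cases "b = Suc a")
      case True
      then have "int b - 1 = int a" "int b = int a + 1" by auto
      then show False using a1 b1 by simp
    next
      case False
      then have le: "int a + 1 \<le> int b - 1" using ab by simp
      have "?G (int a + 1 - 1) * ?G (int b - 1 + 1) \<le> ?G (int a + 1) * ?G (int b - 1)"
        by (rule IPF2[OF v lam le])
      then have pf: "?G (int a) * ?G (int b) \<le> ?G (int a + 1) * ?G (int b - 1)" by simp
      have gb: "?G (int b) > 0" using b1(2) nn[of "int b + 1"] by linarith
      have "?G (int a + 1) * ?G (int b - 1) \<le> ?G (int a + 1) * ?G (int b)"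
        using b1(1) nn by (intro mult_left_mono) auto
      also have "\<dots> < ?G (int a) * ?G (int b)"
        using a1 gb by (intro mult_strict_right_mono) auto
      finally show False using pf by simp
    qed
  qed
  show False using ne main[OF P1 P2] main[OF P2 P1] by linarith
qed

lemma mode_plus_eq:
  assumes "vinf q" "lam \<ge> 0" "Pm lam q j"
  shows "mode_plus lam q = j"
proof -
  have "(THE k. Pm lam q k) = j"
    using assms Pm_unique by (intro the_equality) auto
  then show ?thesis by (simp add: mode_plus_def Pm_def)
qed

lemma mode_minus_eq1:
  assumes "mode_plus lam q = m" "m = 0 \<or> F lam q (int m - 1) \<noteq> F lam q (int m)"
  shows "mode_minus lam q = m"
  using assms by (auto simp: mode_minus_def Let_def F_prev F_nat)

lemma mode_minus_eq2:
  assumes "mode_plus lam q = m" "m > 0" "F lam q (int m - 1) = F lam q (int m)"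
  shows "mode_minus lam q = m - 1"
  using assms by (auto simp: mode_minus_def Let_def F_prev F_nat)

lemma chain_nat: "(\<And>j. j < k \<Longrightarrow> g j \<le> g (Suc j)) \<Longrightarrow> i \<le> k \<Longrightarrow> g i \<le> (g k :: real)"
proof (induction k)
  case 0 then show ?case by simp
next
  case (Suc k)
  show ?case
  proof (cases "i = Suc k")
    case True then show ?thesis by simp
  next
    case False
    then have "g i \<le> g k" using Suc by simp
    also have "g k \<le> g (Suc k)" using Suc.prems(1) by simp
    finally show ?thesis .
  qed
qed

lemma F_pos_up:
  assumes v: "vinf q" and lam: "lam \<ge> 0" and mu: "of_nat K \<le> lam + suminf q" "lam + suminf q < of_nat K + 1"
  shows "F lam q (int K) > 0" and "\<And>j. j < K \<Longrightarrow> F lam q (int j) \<le> F lam q (int (Suc j))"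
proof -
  show up: "F lam q (int j) \<le> F lam q (int (Suc j))" if "j < K" for j
  proof -
    have "of_int (int (Suc j)) \<le> lam + suminf q" using that mu(1) by simp
    from IL0[OF v lam this] show ?thesis by simp
  qed
  show "F lam q (int K) > 0"
  proof (rule ccontr)
    assume "\<not> F lam q (int K) > 0"
    then have z: "F lam q (int K) \<le> 0" by simp
    have "\<forall>j\<le>K. F lam q (int j) = 0"
    proof (intro allI impI)
      fix j assume "j \<le> K"
      have "F lam q (int j) \<le> F lam q (int K)"
        using chain_nat[of K "\<lambda>j. F lam q (int j)" j] up \<open>j \<le> K\<close> by blast
      then show "F lam q (int j) = 0" using z F_nonneg[OF v lam, of "int j"] by simp
    qed
    from Ilow[OF v lam this] mu(2) show False by simp
  qed
qed

lemma nabla_facts: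
  assumes "in_nabla lam p"
  shows "vinf p" "lam \<ge> 0" "\<And>i. p i \<le> p 0" "\<And>i. 0 \<le> p i"
proof -
  show le0: "\<And>i. p i \<le> p 0"
    using assms lift_Suc_antimono_le[of p 0] by (auto simp: in_nabla_def)
  show "vinf p" "lam \<ge> 0" "\<And>i. 0 \<le> p i" using assms le0 order_trans
    by (auto simp: in_nabla_def vinf_def)
qed


lemma mode_minus_le: "mode_minus lam q \<le> mode_plus lam q"
  by (auto simp: mode_minus_def Let_def)

lemma mode_minus_ge: "mode_plus lam q - 1 \<le> mode_minus lam q"
  by (auto simp: mode_minus_def Let_def)

lemma case1:
  assumes N: "in_nabla lam p" and k: "real k < ebs_mean lam p" "ebs_mean lam p < real k + 1"
  shows "mode_plus lam (p(0:=0)) \<le> k \<and> k \<le> mode_minus lam p \<and>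
         mode_minus lam p \<le> mode_plus lam p \<and> mode_plus lam p \<le> k + 1"
proof -
  have v: "vinf p" and lam: "lam \<ge> 0" and le0: "\<And>i. p i \<le> p 0" and nn: "\<And>i. 0 \<le> p i"
    using nabla_facts[OF N] by auto
  define mu where "mu = lam + suminf p"
  have mu1: "real k < mu" "mu < real k + 1" using k by (auto simp: mu_def ebs_mean_def)
  define p0 where "p0 = p 0"
  have p01: "0 \<le> p0" "p0 \<le> 1" using v by (auto simp: p0_def vinf_def)
  let ?q = "p(0:=0)"
  define f where "f = F lam p"
  define g where "g = F lam ?q"
  have vg: "vinf ?q" using vinf_upd[OF v] .
  have nu: "suminf ?q = suminf p - p0" using suminf_upd[OF v] by (simp add: p0_def)
  have rel: "f j = (1 - p0) * g j + p0 * g (j-1)" for j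
    using Iremove[OF v lam, of j 0] by (simp add: f_def g_def p0_def)
  have fnn: "0 \<le> f j" for j using F_nonneg[OF v lam] by (simp add: f_def)
  have gnn: "0 \<le> g j" for j using F_nonneg[OF vg lam] by (simp add: g_def)
  have fK: "f (int k) > 0" and up: "\<And>j. j < k \<Longrightarrow> f (int j) \<le> f (int (Suc j))"
    using F_pos_up[OF v lam, of k] mu1 by (auto simp: f_def mu_def)
  have strict: "f (int k - 1) < f (int k)" if "k > 0"
  proof -
    have "of_int (int k) \<le> lam + suminf p" using mu1 by (simp add: mu_def)
    from ILq0[OF v lam this]
    have q: "real k * (f (int k) - f (int k - 1)) \<ge> (mu - real k) * f (int k - 1)"
      by (simp add: f_def mu_def)
    show ?thesis
    proof (cases "f (int k - 1) > 0")
      case True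
      then have "(mu - real k) * f (int k - 1) > 0" using mu1 by simp
      then have "real k * (f (int k) - f (int k - 1)) > 0" using q by linarith
      then show ?thesis using that by (simp add: zero_less_mult_iff)
    next
      case False
      then have "f (int k - 1) = 0" using fnn[of "int k - 1"] by simp
      then show ?thesis using fK by simp
    qed
  qed
  define c where "c = (if p0 > 0 then p0 else min 1 ((real k + 1 - mu) / 2))"
  have c: "0 < c" "c \<le> 1" using p01 mu1 by (auto simp: c_def)
  have qle: "\<forall>i. ?q i \<le> c"
  proof
    fix i
    show "?q i \<le> c"
    proof (cases "p0 > 0")
      case True then show ?thesis using le0 by (simp add: c_def p0_def)
    next
      case False
      then have "p i = 0" using le0[of i] nn[of i] p01 by (simp add: p0_def)
      then show ?thesis using c by simp
    qed
  qed
  have cmu: "lam + suminf ?q + c < of_int (int k) + 1"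
  proof (cases "p0 > 0")
    case True then show ?thesis using nu mu1 by (simp add: c_def mu_def)
  next
    case False
    have "c = min 1 ((real k + 1 - mu) / 2)" using False by (simp add: c_def)
    then have "c \<le> (real k + 1 - mu) / 2" by (simp only: min.cobounded2)
    then show ?thesis using nu mu1 False p01 by (simp add: mu_def)
  qed
  have SUg: "g (int k + 1) < g (int k) \<or> (g (int k) = 0 \<and> g (int k + 1) = 0)"
    using SU[OF vg lam c qle cmu] by (simp add: g_def)
  have exg: "\<exists>j. g (int j) > g (int j + 1) \<and> j \<le> k"
  proof (rule ccontr)
    assume "\<not> ?thesis"
    then have H: "\<And>j. j \<le> k \<Longrightarrow> g (int j) \<le> g (int j + 1)" by (meson not_le)
    then have "g (int k) = 0" using SUg by (metis order.refl not_le)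
    moreover have "g (int j) \<le> g (int k)" if "j \<le> k" for j
      using chain_nat[of k "\<lambda>j. g (int j)" j] H that by (simp add: add.commute)
    ultimately have "\<forall>j\<le>k. F lam ?q (int j) = 0" using gnn by (auto simp: g_def intro: antisym)
    from Ilow[OF vg lam this] have "lam + suminf ?q \<ge> real k + 1" by simp
    then show False using nu mu1 p01 by (simp add: mu_def)
  qed
  define j0 where "j0 = (LEAST j. g (int j) > g (int j + 1))"
  have j0: "g (int j0) > g (int j0 + 1)" "j0 \<le> k"
    using exg LeastI_ex[of "\<lambda>j. g (int j) > g (int j + 1)"] Least_le[of "\<lambda>j. g (int j) > g (int j + 1)"]
    unfolding j0_def by (blast, meson order_trans)
  have j0b: "j0 = 0 \<or> g (int j0 - 1) \<le> g (int j0)"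
  proof (cases "j0 = 0")
    case False
    then have "\<not> g (int (j0 - 1)) > g (int (j0 - 1) + 1)"
      using not_less_Least[of "j0 - 1" "\<lambda>j. g (int j) > g (int j + 1)"] unfolding j0_def[symmetric] by simp
    moreover have "int (j0 - 1) = int j0 - 1" "int (j0 - 1) + 1 = int j0" using False by auto
    ultimately show ?thesis by simp
  qed simp
  have mg: "mode_plus lam ?q = j0"
    using mode_plus_eq[OF vg lam] j0 j0b by (simp add: Pm_F g_def)
  have fmode: "k \<le> mode_minus lam p \<and> mode_plus lam p \<le> k + 1"
  proof (cases "f (int k) > f (int k + 1)")
    case True
    have P: "Pm lam p k"
      unfolding Pm_F using True strict by (cases "k = 0") (auto simp: f_def less_imp_le)
    have m: "mode_plus lam p = k" by (rule mode_plus_eq[OF v lam P])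
    have "mode_minus lam p = k"
      by (rule mode_minus_eq1[OF m]) (use strict in \<open>auto simp: f_def\<close>)
    then show ?thesis using m by simp
  next
    case False
    then have fk1: "f (int k) \<le> f (int k + 1)" by simp
    then have fk1p: "f (int k + 1) > 0" using fK by simp
    have gs: "g (int k + 1) < g (int k)"
    proof (rule ccontr)
      assume "\<not> ?thesis"
      then have "g (int k) = 0" "g (int k + 1) = 0" using SUg by auto
      then have "f (int k + 1) = 0" using rel[of "int k + 1"] by simp
      then show False using fk1p by simp
    qed
    have p0pos: "p0 > 0"
    proof (rule ccontr)
      assume "\<not> p0 > 0"
      then have "p0 = 0" using p01 by simp
      then have "?q = p" by (auto simp: p0_def)
      then have "f = g" by (simp add: f_def g_def)
      then show False using gs False by simp
    qed
    have "g (int k + 1 + 1) \<le> g (int k + 1)"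
    proof -
      have "\<forall>i. ?q i \<le> p0" using le0 p01 by (simp add: p0_def)
      moreover have "lam + suminf ?q + p0 \<le> of_int (int k + 1) + 1" using nu mu1 by (simp add: mu_def)
      ultimately have "F lam ?q (int k + 1 + 1) \<le> F lam ?q (int k + 1)"
        by (rule IWU[OF vg lam p0pos p01(2)])
      then show ?thesis by (simp only: g_def)
    qed
    have "f (int k + 1 + 1) < f (int k + 1)"
    proof -
      have "f (int k + 1 + 1) = (1 - p0) * g (int k + 1 + 1) + p0 * g (int k + 1 + 1 - 1)" by (rule rel)
      then have "f (int k + 1 + 1) = (1 - p0) * g (int k + 1 + 1) + p0 * g (int k + 1)" by (simp only: add_diff_cancel_right')
      moreover have "f (int k + 1) = (1 - p0) * g (int k + 1) + p0 * g (int k)" using rel by simp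
      moreover have "(1 - p0) * g (int k + 1 + 1) \<le> (1 - p0) * g (int k + 1)"
        using \<open>g (int k + 1 + 1) \<le> g (int k + 1)\<close> p01 by (intro mult_left_mono) auto
      moreover have "p0 * g (int k + 1) < p0 * g (int k)" using gs p0pos by simp
      ultimately show ?thesis by linarith
    qed
    then have P: "Pm lam p (Suc k)"
      unfolding Pm_F using fk1 by (simp add: f_def add_ac)
    have m: "mode_plus lam p = Suc k" by (rule mode_plus_eq[OF v lam P])
    then show ?thesis using mode_minus_ge[of lam p] by simp
  qed
  show ?thesis using mg j0(2) fmode mode_minus_le[of lam p] by simp
qed


lemma p0_le_suminf: "vinf p \<Longrightarrow> p 0 \<le> suminf p"
  using sum_le_suminf[of p "{0}"] by (auto simp: vinf_def)

lemma U0_lt1: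
  assumes N: "in_nabla lam p" and mu: "ebs_mean lam p = real k" and p1: "p 0 < 1"
  shows "F lam p (int k + 1) < F lam p (int k)"
proof -
  have v: "vinf p" and lam: "lam \<ge> 0" and le0: "\<And>i. p i \<le> p 0" and nn: "\<And>i. 0 \<le> p i"
    using nabla_facts[OF N] by auto
  have mu1: "lam + suminf p = real k" using mu by (simp add: ebs_mean_def)
  define p0 where "p0 = p 0"
  have p01: "0 \<le> p0" "p0 < 1" using nn p1 by (auto simp: p0_def)
  let ?q = "p(0:=0)"
  define f where "f = F lam p"
  define g where "g = F lam ?q"
  have vg: "vinf ?q" using vinf_upd[OF v] .
  have nu: "suminf ?q = suminf p - p0" using suminf_upd[OF v] by (simp add: p0_def)
  have rel: "f j = (1 - p0) * g j + p0 * g (j-1)" for j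
    using Iremove[OF v lam, of j 0] by (simp add: f_def g_def p0_def)
  have fK: "f (int k) > 0"
    using F_pos_up(1)[OF v lam, of k] mu1 by (simp add: f_def)
  define c where "c = (if p0 > 0 then p0 else 1/2)"
  have c: "0 < c" "c \<le> 1" using p01 by (auto simp: c_def)
  have qle: "\<forall>i. ?q i \<le> c"
  proof
    fix i
    show "?q i \<le> c"
    proof (cases "p0 > 0")
      case True then show ?thesis using le0 by (simp add: c_def p0_def)
    next
      case False
      then have "p i = 0" using le0[of i] nn[of i] p01 by (simp add: p0_def)
      then show ?thesis using c by simp
    qed
  qed
  have cmu: "lam + suminf ?q + c < of_int (int k) + 1"
    using nu mu1 p01 by (cases "p0 > 0") (auto simp: c_def)
  have SUg: "g (int k + 1) < g (int k) \<or> (g (int k) = 0 \<and> g (int k + 1) = 0)"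
    using SU[OF vg lam c qle cmu] by (simp add: g_def)
  have fk1: "f (int k + 1) = (1 - p0) * g (int k + 1) + p0 * g (int k)"
    using rel[of "int k + 1"] by simp
  have fk: "f (int k) = (1 - p0) * g (int k) + p0 * g (int k - 1)"
    using rel[of "int k"] by simp
  show ?thesis
  proof (cases "g (int k) = 0 \<and> g (int k + 1) = 0")
    case True
    then have "f (int k + 1) = 0" using fk1 by simp
    then show ?thesis using fK by (simp add: f_def)
  next
    case False
    then have gs: "g (int k + 1) < g (int k)" using SUg by auto
    have t2: "p0 * g (int k) \<le> p0 * g (int k - 1)"
    proof (cases "p0 > 0")
      case False then show ?thesis using p01 by simp
    next
      case True
      have a1: "\<forall>i. ?q i \<le> p0" using le0 p01 by (simp add: p0_def)
      have a2: "lam + suminf ?q + p0 \<le> of_int (int k - 1) + 1" using nu mu1 by simp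
      have a3: "p0 \<le> 1" using p01 by simp
      have "F lam ?q (int k - 1 + 1) \<le> F lam ?q (int k - 1)"
        by (rule IWU[OF vg lam True a3 a1 a2])
      then have "g (int k) \<le> g (int k - 1)" by (simp add: g_def)
      then show ?thesis using True by (intro mult_left_mono) auto
    qed
    have "(1 - p0) * g (int k + 1) < (1 - p0) * g (int k)" using gs p01 by simp
    then show ?thesis using fk fk1 t2 by (simp add: f_def)
  qed
qed

lemma U0:
  "in_nabla lam p \<Longrightarrow> ebs_mean lam p = real k \<Longrightarrow> F lam p (int k + 1) < F lam p (int k)"
proof (induction k arbitrary: p)
  case 0
  have v: "vinf p" and lam: "lam \<ge> 0" using nabla_facts[OF "0.prems"(1)] by auto
  have "p 0 \<le> suminf p" using p0_le_suminf[OF v] .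
  then have "p 0 < 1" using "0.prems"(2) lam by (simp add: ebs_mean_def)
  then show ?case using U0_lt1[OF "0.prems"] by simp
next
  case (Suc k)
  have N: "in_nabla lam p" and mu: "ebs_mean lam p = real (Suc k)" using Suc.prems by auto
  have v: "vinf p" and lam: "lam \<ge> 0" and le0: "\<And>i. p i \<le> p 0" and nn: "\<And>i. 0 \<le> p i"
    using nabla_facts[OF N] by auto
  show ?case
  proof (cases "p 0 < 1")
    case True then show ?thesis using U0_lt1[OF N mu] by simp
  next
    case False
    then have p1: "p 0 = 1" using v by (auto simp: vinf_def intro: antisym)
    define p' where "p' = (\<lambda>i. p (Suc i))"
    have N': "in_nabla lam p'"
    proof -
      have "summable p'" using v summable_ignore_initial_segment[of p 1] by (simp add: vinf_def p'_def)
      then show ?thesis using N le0 p1 by (auto simp: in_nabla_def p'_def)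
    qed
    have "suminf p' = suminf p - p 0"
      using suminf_split_head[of p] v by (simp add: vinf_def p'_def)
    then have mu': "ebs_mean lam p' = real k" using mu p1 by (simp add: ebs_mean_def)
    have IH: "F lam p' (int k + 1) < F lam p' (int k)" using Suc.IH[OF N' mu'] .
    have rel: "F lam p j = F lam p' (j - 1)" for j
      using Iremove[OF v lam, of j 0] F_shift0[OF v, of lam] p1 by (simp add: p'_def)
    show ?thesis using IH rel[of "int (Suc k) + 1"] rel[of "int (Suc k)"] by (simp add: add.commute)
  qed
qed

lemma ind_form:
  assumes N: "in_nabla lam p" and z: "\<forall>i. p i = 0 \<or> p i = 1"
  shows "\<exists>a. p = (\<lambda>i. if i < a then 1 else 0)"
proof -
  have v: "vinf p" and le: "\<And>i j. i \<le> j \<Longrightarrow> p j \<le> p i" and nn: "\<And>i. 0 \<le> p i"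
    using nabla_facts[OF N] N lift_Suc_antimono_le[of p] by (auto simp: in_nabla_def)
  have "p \<longlonglongrightarrow> 0" using v summable_LIMSEQ_zero by (auto simp: vinf_def)
  then have "eventually (\<lambda>i. p i < 1) sequentially" by (auto simp: order_tendsto_iff)
  then obtain i0 where "p i0 < 1" by (auto simp: eventually_sequentially)
  then have ex: "\<exists>i. p i \<noteq> 1" by (intro exI[of _ i0]) simp
  define a where "a = (LEAST i. p i \<noteq> 1)"
  have pa: "p a = 0" using LeastI_ex[OF ex] z unfolding a_def[symmetric] by metis
  have "p i = (if i < a then 1 else 0)" for i
  proof (cases "i < a")
    case True
    then show ?thesis using not_less_Least[of i "\<lambda>i. p i \<noteq> 1"] unfolding a_def[symmetric] by simp
  next
    case False
    then have "p i \<le> p a" using le by simp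
    then show ?thesis using pa nn[of i] False by simp
  qed
  then show ?thesis by blast
qed


lemma pois_Suc: "pois lam (Suc n) = pois lam n * lam / real (Suc n)"
  by (simp add: pois_def field_simps)

lemma pois_pos: "lam > 0 \<Longrightarrow> pois lam n > 0"
  by (simp add: pois_def)

lemma case2:
  assumes N: "in_nabla lam p" and mu: "ebs_mean lam p = real k"
    and nt: "\<not> (\<exists>a<k. lam = real k - real a \<and> (\<forall>i. p i = (if i < a then 1 else 0)))"
  shows "mode_plus lam p = k \<and> mode_minus lam p = k"
proof -
  have v: "vinf p" and lam: "lam \<ge> 0" and le0: "\<And>i. p i \<le> p 0" and nn: "\<And>i. 0 \<le> p i"
    using nabla_facts[OF N] by auto
  have mu1: "lam + suminf p = real k" using mu by (simp add: ebs_mean_def)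
  define f where "f = F lam p"
  have fnn: "0 \<le> f j" for j using F_nonneg[OF v lam] by (simp add: f_def)
  have U: "f (int k + 1) < f (int k)" using U0[OF N mu] by (simp add: f_def)
  have fK: "f (int k) > 0" using F_pos_up(1)[OF v lam, of k] mu1 by (simp add: f_def)
  have strict: "f (int k - 1) < f (int k)" if k0: "k > 0"
  proof (cases "f (int k - 1) > 0")
    case False
    then have "f (int k - 1) = 0" using fnn[of "int k - 1"] by simp
    then show ?thesis using fK by simp
  next
    case True
    have "\<exists>i. 0 < p i \<and> p i < 1"
    proof (rule ccontr)
      assume "\<not> ?thesis"
      note neg = this
      have z: "\<forall>i. p i = 0 \<or> p i = 1"
      proof
        fix i
        have "0 \<le> p i" "p i \<le> 1" using nn v by (auto simp: vinf_def)
        moreover have "\<not> (0 < p i \<and> p i < 1)" using neg by blast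
        ultimately show "p i = 0 \<or> p i = 1" by linarith
      qed
      obtain a where a: "p = (\<lambda>i. if i < a then 1 else 0)" using ind_form[OF N z] by blast
      have "suminf p = real a"
        unfolding a by (subst suminf_finite[of "{..<a}"]) auto
      then have lk: "lam = real k - real a" using mu1 by simp
      show False
      proof (cases "a < k")
        case True
        then show False using nt lk a by auto
      next
        case False
        then have "a = k" "lam = 0" using lk lam by auto
        then have "f (int (k - 1)) = 0" using F_ind[of lam a "k - 1"] k0 a by (simp add: f_def)
        moreover have "int (k - 1) = int k - 1" using k0 by simp
        ultimately show False using True by simp
      qed
    qed
    then obtain i where pi: "0 < p i" "p i < 1" by blast
    let ?h = "F lam (p(i:=0))"
    have vh: "vinf (p(i:=0))" using vinf_upd[OF v] .
    have muh: "lam + suminf (p(i:=0)) = real k - p i" using suminf_upd[OF v, of i] mu1 by simp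
    have hnn: "0 \<le> ?h j" for j using F_nonneg[OF vh lam] .
    have hs: "?h (int k - 1 - 1) < ?h (int k - 1)"
    proof (cases "?h (int k - 1 - 1) > 0")
      case True
      have "of_int (int k - 1) \<le> lam + suminf (p(i:=0))" using muh pi by simp
      from ILq0[OF vh lam this]
      have "of_int (int k - 1) * (?h (int k - 1) - ?h (int k - 1 - 1)) \<ge> (1 - p i) * ?h (int k - 1 - 1)"
        using muh by simp
      moreover have "(1 - p i) * ?h (int k - 1 - 1) > 0" using True pi by simp
      ultimately have "of_int (int k - 1) * (?h (int k - 1) - ?h (int k - 1 - 1)) > 0" by linarith
      moreover have "of_int (int k - 1) \<ge> (0::real)" using k0 by simp
      ultimately have "?h (int k - 1) - ?h (int k - 1 - 1) > 0" by (simp add: zero_less_mult_iff)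
      then show ?thesis by simp
    next
      case False
      then have h0: "?h (int k - 1 - 1) = 0" using hnn by (meson antisym not_le)
      have "f (int k - 1) = (1 - p i) * ?h (int k - 1) + p i * ?h (int k - 1 - 1)"
        using Iremove[OF v lam, of "int k - 1" i] by (simp add: f_def)
      then have "f (int k - 1) = (1 - p i) * ?h (int k - 1)" using h0 by simp
      then have "?h (int k - 1) > 0" using True pi by (simp add: zero_less_mult_iff)
      then show ?thesis using h0 by simp
    qed
    have "of_int (int k) \<le> lam + suminf p" using mu1 by simp
    from ILq[OF v lam this, of i]
    have "real k * (f (int k) - f (int k - 1)) \<ge> p i ^ 2 * (?h (int k - 1) - ?h (int k - 1 - 1))"
      using mu1 by (simp add: f_def)
    moreover have "p i ^ 2 * (?h (int k - 1) - ?h (int k - 1 - 1)) > 0" using hs pi by simp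
    ultimately have "real k * (f (int k) - f (int k - 1)) > 0" by linarith
    then show ?thesis by (simp add: zero_less_mult_iff)
  qed
  have P: "Pm lam p k"
    unfolding Pm_F using U strict by (cases "k = 0") (auto simp: f_def less_imp_le)
  have m: "mode_plus lam p = k" by (rule mode_plus_eq[OF v lam P])
  have "mode_minus lam p = k"
    by (rule mode_minus_eq1[OF m]) (use strict in \<open>auto simp: f_def\<close>)
  then show ?thesis using m by simp
qed

lemma twin:
  assumes ak: "a < k" and lk: "lam = real k - real a" and pa: "\<forall>i. p i = (if i < a then 1 else 0)"
  shows "(\<forall>j. ebs_pmf lam p j = (if j < a then 0 else exp (- lam) * lam ^ (j - a) / fact (j - a)))
         \<and> mode_plus lam p = k \<and> mode_minus lam p = k - 1"
proof -
  have pe: "p = (\<lambda>i. if i < a then 1 else 0)" using pa by auto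
  have form: "ebs_pmf lam p j = (if j < a then 0 else pois lam (j - a))" for j
    using F_ind[of lam a j] pe by (simp add: F_nat)
  have v: "vinf p" unfolding pe vinf_def by (auto intro: summable_finite[of "{..<a}"])
  have lam0: "lam > 0" using ak lk by simp
  define L where "L = k - a"
  have L: "L \<ge> 1" "lam = real L" using ak lk by (auto simp: L_def)
  have fk: "ebs_pmf lam p k = pois lam L" using form[of k] ak by (simp add: L_def)
  have fk1: "ebs_pmf lam p (Suc k) = pois lam (Suc L)" using form[of "Suc k"] ak by (simp add: L_def Suc_diff_le)
  have fkm: "ebs_pmf lam p (k - 1) = pois lam (L - 1)" using form[of "k - 1"] ak by (simp add: L_def)
  have e1: "pois lam L = pois lam (L - 1)"
  proof -
    have "L = Suc (L - 1)" using L by simp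
    then have "pois lam L = pois lam (L - 1) * lam / real L" using pois_Suc[of lam "L - 1"] by simp
    then show ?thesis using L by simp
  qed
  have e2: "pois lam (Suc L) < pois lam L"
  proof -
    have "pois lam (Suc L) = pois lam L * (real L / real (Suc L))" using pois_Suc[of lam L] L by simp
    moreover have "pois lam L * (real L / real (Suc L)) < pois lam L * 1"
      using pois_pos[OF lam0, of L] by (intro mult_strict_left_mono) auto
    ultimately show ?thesis by simp
  qed
  have P: "Pm lam p k" unfolding Pm_def using fk fk1 fkm e1 e2 by simp
  have m: "mode_plus lam p = k" by (rule mode_plus_eq[OF v _ P]) (use lam0 in simp)
  have "F lam p (int k - 1) = F lam p (int k)" using F_prev[of k lam p] F_nat[of lam p k] ak fk fkm e1 by simp
  then have "mode_minus lam p = k - 1" using mode_minus_eq2[OF m] ak by simp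
  then show ?thesis using form m by (simp add: pois_def)
qed

theorem theorem2:
  fixes lam :: real and p :: "nat \<Rightarrow> real"
  assumes "in_nabla lam p"
  shows "(\<forall>k::nat. real k < ebs_mean lam p \<and> ebs_mean lam p < real k + 1 \<longrightarrow>
            mode_plus lam (p(0 := 0)) \<le> k \<and> k \<le> mode_minus lam p \<and>
            mode_minus lam p \<le> mode_plus lam p \<and> mode_plus lam p \<le> k + 1)
       \<and> (\<forall>k::nat. ebs_mean lam p = real k \<longrightarrow>
            ((\<not> (\<exists>a<k. lam = real k - real a \<and> (\<forall>i. p i = (if i < a then 1 else 0)))) \<longrightarrow>
               mode_plus lam p = k \<and> mode_minus lam p = k)
          \<and> (\<forall>a<k. lam = real k - real a \<and> (\<forall>i. p i = (if i < a then 1 else 0)) \<longrightarrow>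
               (\<forall>j. ebs_pmf lam p j =
                    (if j < a then 0 else exp (- lam) * lam ^ (j - a) / fact (j - a)))
               \<and> mode_plus lam p = k \<and> mode_minus lam p = k - 1))"
  using case1[OF assms] case2[OF assms] twin by blast


end
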